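(* Let $G$ be a group, $R$ a unital ring and $E$ any directed graph. Then every standard $G$-grading of the Leavitt path algebra $L_R(E)$ is virtually epsilon-strong.
   Context: A directed graph $E=(E^0,E^1,s,r)$ has vertex set $E^0$, edge set $E^1$, source and range maps $s,r\colon E^1\to E^0$. The Leavitt path algebra $L_R(E)$ is the $R$-algebra generated by symbols $v$ ($v\in E^0$), $f,f^*$ ($f\in E^1$), with $R$ commuting with the generators, subject to: $uv=\delta_{u,v}u$; $s(f)f=fr(f)=f$ and $r(f)f^*=f^*s(f)=f^*$; $f^*f'=\delta_{f,f'}r(f)$; and $\sum_{f\in E^1,s(f)=v}ff^*=v$ for every $v$ with $s^{-1}(v)$ nonempty and finite. A standard $G$-grading: assign $\deg(v)=e$ for all $v\in E^0$, choose for each $f\in E^1$ some $\deg(f)\in G$ and set $\deg(f^* )=\deg(f)^{-1}$; this grades the free $R$-algebra on these symbols, the ideal of relations is homogeneous, and $L_R(E)$ receives the quotient grading. Rings are associative, not necessarily unital. A $G$-grading $S=\bigoplus_gS_g$ is virtually epsilon-strong if $S_gS_{g^{-1}}S_g=S_g$ for all $g$ and each ring $S_gS_{g^{-1}}$ has enough idempotents: there is a set $M$ of pairwise orthogonal commuting idempotents of it such that the set $\bigvee M$ of finite joins (equivalently finite sums) of elements of $M$ is a set of local units, i.e. for each $x$ there is $f\in\bigvee M$ with $fx=xf=x$. *)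

theory Defs
  imports "HOL-Algebra.Ring" "HOL-Library.Function_Algebras"
begin

text \<open>A ring is given as a HOL-Algebra ring record; the field one is ignored
(rings need not be unital).  All notions below only use carrier, add, mult, zero.\<close>

inductive_set set_prod :: "('a, 'm) ring_scheme \<Rightarrow> 'a set \<Rightarrow> 'a set \<Rightarrow> 'a set"
  for A :: "('a, 'm) ring_scheme" and X :: "'a set" and Y :: "'a set" where
  sp_zero: "\<zero>\<^bsub>A\<^esub> \<in> set_prod A X Y"
| sp_prod: "x \<in> X \<Longrightarrow> y \<in> Y \<Longrightarrow> x \<otimes>\<^bsub>A\<^esub> y \<in> set_prod A X Y"
| sp_add: "a \<in> set_prod A X Y \<Longrightarrow> b \<in> set_prod A X Y \<Longrightarrow> a \<oplus>\<^bsub>A\<^esub> b \<in> set_prod A X Y"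

definition joins :: "('a, 'm) ring_scheme \<Rightarrow> 'a set \<Rightarrow> 'a set" where
  "joins A M = {finsum A id F | F. finite F \<and> F \<subseteq> M}"

definition has_enough_idempotents :: "('a, 'm) ring_scheme \<Rightarrow> 'a set \<Rightarrow> bool" where
  "has_enough_idempotents A T \<longleftrightarrow>
     (\<exists>M. M \<subseteq> T
        \<and> (\<forall>e\<in>M. e \<otimes>\<^bsub>A\<^esub> e = e)
        \<and> (\<forall>e\<in>M. \<forall>f\<in>M. e \<noteq> f \<longrightarrow> e \<otimes>\<^bsub>A\<^esub> f = \<zero>\<^bsub>A\<^esub>)
        \<and> (\<forall>e\<in>M. \<forall>f\<in>M. e \<otimes>\<^bsub>A\<^esub> f = f \<otimes>\<^bsub>A\<^esub> e)
        \<and> (\<forall>x\<in>T. \<exists>f\<in>joins A M. f \<otimes>\<^bsub>A\<^esub> x = x \<and> x \<otimes>\<^bsub>A\<^esub> f = x))"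

definition virtually_epsilon_strong ::
  "('g, 'b) monoid_scheme \<Rightarrow> ('a, 'm) ring_scheme \<Rightarrow> ('g \<Rightarrow> 'a set) \<Rightarrow> bool" where
  "virtually_epsilon_strong G A S \<longleftrightarrow>
     (\<forall>g\<in>carrier G.
        set_prod A (set_prod A (S g) (S (inv\<^bsub>G\<^esub> g))) (S g) = S g
      \<and> has_enough_idempotents A (set_prod A (S g) (S (inv\<^bsub>G\<^esub> g))))"

text \<open>Generator symbols: vertices v, edges f, ghost edges f*.\<close>
datatype ('v, 'e) lgen = LV 'v | LE 'e | LG 'e

definition lgens :: "'v set \<Rightarrow> 'e set \<Rightarrow> ('v, 'e) lgen set" where
  "lgens E0 E1 = LV ` E0 \<union> LE ` E1 \<union> LG ` E1"

text \<open>The free (non-unital) R-algebra on the symbols: finitely supported R-valued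
functions on nonempty words in the generators.\<close>
definition free_alg :: "'v set \<Rightarrow> 'e set \<Rightarrow> (('v, 'e) lgen list \<Rightarrow> 'r::{ring, monoid_mult}) set" where
  "free_alg E0 E1 = {f. finite {w. f w \<noteq> 0} \<and> (\<forall>w. f w \<noteq> 0 \<longrightarrow> w \<noteq> [] \<and> set w \<subseteq> lgens E0 E1)}"

definition fa_mult :: "('x list \<Rightarrow> 'r::{ring, monoid_mult}) \<Rightarrow> ('x list \<Rightarrow> 'r) \<Rightarrow> ('x list \<Rightarrow> 'r)" where
  "fa_mult f h = (\<lambda>w. \<Sum>i\<le>length w. f (take i w) * h (drop i w))"

definition monom :: "'x list \<Rightarrow> ('x list \<Rightarrow> 'r::{ring, monoid_mult})" where
  "monom w = (\<lambda>x. if x = w then 1 else 0)"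

text \<open>The defining relations of L_R(E), written as elements x of the free algebra (x = 0).\<close>
definition lpa_rels :: "'v set \<Rightarrow> 'e set \<Rightarrow> ('e \<Rightarrow> 'v) \<Rightarrow> ('e \<Rightarrow> 'v)
    \<Rightarrow> (('v, 'e) lgen list \<Rightarrow> 'r::{ring, monoid_mult}) set" where
  "lpa_rels E0 E1 s r =
     {monom [LV u, LV v] - (if u = v then monom [LV u] else 0) | u v. u \<in> E0 \<and> v \<in> E0}
   \<union> {monom [LV (s f), LE f] - monom [LE f] | f. f \<in> E1}
   \<union> {monom [LE f, LV (r f)] - monom [LE f] | f. f \<in> E1}
   \<union> {monom [LV (r f), LG f] - monom [LG f] | f. f \<in> E1}
   \<union> {monom [LG f, LV (s f)] - monom [LG f] | f. f \<in> E1}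
   \<union> {monom [LG f, LE f'] - (if f = f' then monom [LV (r f)] else 0) | f f'. f \<in> E1 \<and> f' \<in> E1}
   \<union> {(\<Sum>f\<in>{f\<in>E1. s f = v}. monom [LE f, LG f]) - monom [LV v] | v.
        v \<in> E0 \<and> {f\<in>E1. s f = v} \<noteq> {} \<and> finite {f\<in>E1. s f = v}}"

inductive_set lpa_ideal :: "'v set \<Rightarrow> 'e set \<Rightarrow> ('e \<Rightarrow> 'v) \<Rightarrow> ('e \<Rightarrow> 'v)
    \<Rightarrow> (('v, 'e) lgen list \<Rightarrow> 'r::{ring, monoid_mult}) set"
  for E0 E1 s r where
  li_rel: "x \<in> lpa_rels E0 E1 s r \<Longrightarrow> x \<in> lpa_ideal E0 E1 s r"
| li_zero: "0 \<in> lpa_ideal E0 E1 s r"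
| li_add: "x \<in> lpa_ideal E0 E1 s r \<Longrightarrow> y \<in> lpa_ideal E0 E1 s r \<Longrightarrow> x + y \<in> lpa_ideal E0 E1 s r"
| li_lsmult: "x \<in> lpa_ideal E0 E1 s r \<Longrightarrow> (\<lambda>w. c * x w) \<in> lpa_ideal E0 E1 s r"
| li_rsmult: "x \<in> lpa_ideal E0 E1 s r \<Longrightarrow> (\<lambda>w. x w * c) \<in> lpa_ideal E0 E1 s r"
| li_lmult: "x \<in> lpa_ideal E0 E1 s r \<Longrightarrow> a \<in> free_alg E0 E1 \<Longrightarrow> fa_mult a x \<in> lpa_ideal E0 E1 s r"
| li_rmult: "x \<in> lpa_ideal E0 E1 s r \<Longrightarrow> a \<in> free_alg E0 E1 \<Longrightarrow> fa_mult x a \<in> lpa_ideal E0 E1 s r"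

definition lclass :: "'v set \<Rightarrow> 'e set \<Rightarrow> ('e \<Rightarrow> 'v) \<Rightarrow> ('e \<Rightarrow> 'v)
    \<Rightarrow> (('v, 'e) lgen list \<Rightarrow> 'r::{ring, monoid_mult}) \<Rightarrow> (('v, 'e) lgen list \<Rightarrow> 'r) set" where
  "lclass E0 E1 s r f = {h \<in> free_alg E0 E1. h - f \<in> lpa_ideal E0 E1 s r}"

text \<open>The Leavitt path algebra L_R(E) as the quotient ring (one is unused: L_R(E) need not be unital).\<close>
definition lpa :: "'v set \<Rightarrow> 'e set \<Rightarrow> ('e \<Rightarrow> 'v) \<Rightarrow> ('e \<Rightarrow> 'v)
    \<Rightarrow> (('v, 'e) lgen list \<Rightarrow> 'r::{ring, monoid_mult}) set ring" where
  "lpa E0 E1 s r =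
    \<lparr> carrier = lclass E0 E1 s r ` free_alg E0 E1,
      mult = (\<lambda>X Y. lclass E0 E1 s r (fa_mult (SOME f. f \<in> X) (SOME h. h \<in> Y))),
      one = undefined,
      zero = lclass E0 E1 s r 0,
      add = (\<lambda>X Y. lclass E0 E1 s r ((SOME f. f \<in> X) + (SOME h. h \<in> Y))) \<rparr>"

fun gen_deg :: "('g, 'b) monoid_scheme \<Rightarrow> ('e \<Rightarrow> 'g) \<Rightarrow> ('v, 'e) lgen \<Rightarrow> 'g" where
  "gen_deg G d (LV v) = \<one>\<^bsub>G\<^esub>"
| "gen_deg G d (LE f) = d f"
| "gen_deg G d (LG f) = inv\<^bsub>G\<^esub> (d f)"

definition word_deg :: "('g, 'b) monoid_scheme \<Rightarrow> ('e \<Rightarrow> 'g) \<Rightarrow> ('v, 'e) lgen list \<Rightarrow> 'g" where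
  "word_deg G d w = foldr (\<lambda>a x. gen_deg G d a \<otimes>\<^bsub>G\<^esub> x) w \<one>\<^bsub>G\<^esub>"

definition lpa_comp :: "('g, 'b) monoid_scheme \<Rightarrow> 'v set \<Rightarrow> 'e set \<Rightarrow> ('e \<Rightarrow> 'v) \<Rightarrow> ('e \<Rightarrow> 'v)
    \<Rightarrow> ('e \<Rightarrow> 'g) \<Rightarrow> 'g \<Rightarrow> (('v, 'e) lgen list \<Rightarrow> 'r::{ring, monoid_mult}) set set" where
  "lpa_comp G E0 E1 s r d g =
     lclass E0 E1 s r ` {f \<in> free_alg E0 E1. \<forall>w. f w \<noteq> 0 \<longrightarrow> word_deg G d w = g}"

end

theory Submission
  imports Defs
begin


definition cm :: "'r::{ring,monoid_mult} \<Rightarrow> 'x list \<Rightarrow> ('x list \<Rightarrow> 'r)" where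
  "cm c w = (\<lambda>x. if x = w then c else 0)"

lemma monom_cm: "monom w = cm 1 w" by (simp add: monom_def cm_def)

lemma fa_mult_cm: "fa_mult (cm a u) (cm b v) = cm (a*b) (u@v)"
proof
  fix x :: "'a list"
  have "fa_mult (cm a u) (cm b v) x = (\<Sum>i\<le>length x. if i = length u \<and> x = u @ v then a*b else 0)"
    unfolding fa_mult_def cm_def
  proof (rule sum.cong[OF refl])
    fix i assume i: "i \<in> {..length x}"
    show "(if take i x = u then a else 0) * (if drop i x = v then b else 0) =
      (if i = length u \<and> x = u @ v then a * b else 0)"
      using i by (auto simp: min_def split: if_splits)
  qed
  also have "\<dots> = cm (a*b) (u@v) x"
    by (auto simp: cm_def)
  finally show "fa_mult (cm a u) (cm b v) x = cm (a*b) (u@v) x" .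
qed

lemma fa_mult_add_left: "fa_mult (f + g) h = fa_mult f h + fa_mult g h"
  by (auto simp: fa_mult_def distrib_right sum.distrib)
lemma fa_mult_add_right: "fa_mult f (g + h) = fa_mult f g + fa_mult f h"
  by (auto simp: fa_mult_def distrib_left sum.distrib)
lemma fa_mult_diff_left: "fa_mult (f - g) h = fa_mult f h - fa_mult g h"
  by (auto simp: fa_mult_def left_diff_distrib sum_subtractf)
lemma fa_mult_diff_right: "fa_mult f (g - h) = fa_mult f g - fa_mult f h"
  by (auto simp: fa_mult_def right_diff_distrib sum_subtractf)
lemma fa_mult_zero_left[simp]: "fa_mult 0 h = 0"
  by (auto simp: fa_mult_def)
lemma fa_mult_zero_right[simp]: "fa_mult h 0 = 0"
  by (auto simp: fa_mult_def)
lemma cm_zero[simp]: "cm 0 w = 0" by (auto simp: cm_def)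

lemma fa_alg_induct[consumes 1, case_names zero step]:
  assumes "p \<in> free_alg E0 E1"
    and "P 0"
    and "\<And>q c w. q \<in> free_alg E0 E1 \<Longrightarrow> P q \<Longrightarrow> w \<noteq> [] \<Longrightarrow> set w \<subseteq> lgens E0 E1
          \<Longrightarrow> q w = 0 \<Longrightarrow> P (q + cm c w)"
  shows "P p"
proof -
  have "\<And>p. p \<in> free_alg E0 E1 \<Longrightarrow> card {w. p w \<noteq> 0} = n \<Longrightarrow> P p" for n
  proof (induction n)
    case 0
    then have "p = 0" by (auto simp: free_alg_def)
    then show ?case using assms(2) by metis
  next
    case (Suc n)
    then have "{w. p w \<noteq> 0} \<noteq> {}" by (metis card.empty Zero_not_Suc)
    then obtain w where w: "p w \<noteq> 0" by auto
    define q where "q = p - cm (p w) w"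
    have fin: "finite {w. p w \<noteq> 0}" using Suc.prems by (auto simp: free_alg_def)
    have sub: "{x. q x \<noteq> 0} = {x. p x \<noteq> 0} - {w}"
      by (auto simp: q_def cm_def)
    have qp: "\<And>x. q x \<noteq> 0 \<Longrightarrow> p x \<noteq> 0" by (auto simp: q_def cm_def split: if_splits)
    have qF: "q \<in> free_alg E0 E1"
      using Suc.prems fin qp by (auto simp: free_alg_def sub)
    have "card {x. q x \<noteq> 0} = n" using Suc.prems fin w by (simp add: sub)
    then have "P q" using Suc.IH qF by blast
    moreover have "w \<noteq> [] \<and> set w \<subseteq> lgens E0 E1" using Suc.prems w by (auto simp: free_alg_def)
    moreover have "q w = 0" by (simp add: q_def cm_def)
    moreover have "p = q + cm (p w) w" by (simp add: q_def)
    ultimately show ?case using assms(3) qF by metis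
  qed
  then show ?thesis using assms(1) by blast
qed

lemma FA_zero[simp]: "0 \<in> free_alg E0 E1"
  by (auto simp: free_alg_def)

lemma FA_add[simp]: "f \<in> free_alg E0 E1 \<Longrightarrow> g \<in> free_alg E0 E1 \<Longrightarrow> f + g \<in> free_alg E0 E1"
proof -
  assume f: "f \<in> free_alg E0 E1" and g: "g \<in> free_alg E0 E1"
  have "{w. (f + g) w \<noteq> 0} \<subseteq> {w. f w \<noteq> 0} \<union> {w. g w \<noteq> 0}" by auto
  then show ?thesis using f g unfolding free_alg_def
    by (auto intro: finite_subset)
qed

lemma FA_lsmult[simp]: "f \<in> free_alg E0 E1 \<Longrightarrow> (\<lambda>w. c * f w) \<in> free_alg E0 E1"
proof -
  assume f: "f \<in> free_alg E0 E1"
  have "{w. c * f w \<noteq> 0} \<subseteq> {w. f w \<noteq> 0}" by auto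
  then show ?thesis using f unfolding free_alg_def
    by (auto intro: finite_subset)
qed

lemma FA_rsmult[simp]: "f \<in> free_alg E0 E1 \<Longrightarrow> (\<lambda>w. f w * c) \<in> free_alg E0 E1"
proof -
  assume f: "f \<in> free_alg E0 E1"
  have "{w. f w * c \<noteq> 0} \<subseteq> {w. f w \<noteq> 0}" by auto
  then show ?thesis using f unfolding free_alg_def
    by (auto intro: finite_subset)
qed

lemma FA_uminus[simp]: "f \<in> free_alg E0 E1 \<Longrightarrow> - f \<in> free_alg E0 E1"
  by (auto simp: free_alg_def)

lemma FA_diff[simp]: "f \<in> free_alg E0 E1 \<Longrightarrow> g \<in> free_alg E0 E1 \<Longrightarrow> f - g \<in> free_alg E0 E1"
  using FA_add[of f E0 E1 "- g"] FA_uminus[of g E0 E1] by simp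

lemma FA_cm[simp]: "w \<noteq> [] \<Longrightarrow> set w \<subseteq> lgens E0 E1 \<Longrightarrow> cm c w \<in> free_alg E0 E1"
proof -
  assume "w \<noteq> []" "set w \<subseteq> lgens E0 E1"
  moreover have "{x. cm c w x \<noteq> 0} \<subseteq> {w}" by (auto simp: cm_def)
  ultimately show ?thesis unfolding free_alg_def
    by (auto intro: finite_subset simp: cm_def split: if_splits)
qed

lemma FA_monom[simp]: "w \<noteq> [] \<Longrightarrow> set w \<subseteq> lgens E0 E1 \<Longrightarrow> monom w \<in> free_alg E0 E1"
  by (simp add: monom_cm)

lemma FA_sum: "finite A \<Longrightarrow> (\<And>a. a \<in> A \<Longrightarrow> f a \<in> free_alg E0 E1) \<Longrightarrow> sum f A \<in> free_alg E0 E1"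
  by (induction A rule: finite_induct) auto

lemma fa_mult_nonzero:
  assumes "fa_mult f g w \<noteq> 0"
  shows "\<exists>i\<le>length w. f (take i w) \<noteq> 0 \<and> g (drop i w) \<noteq> 0"
proof (rule ccontr)
  assume "\<not> ?thesis"
  then have "fa_mult f g w = 0" unfolding fa_mult_def
    by (intro sum.neutral) auto
  then show False using assms by simp
qed

lemma FA_mult[simp]:
  assumes f: "f \<in> free_alg E0 E1" and g: "g \<in> free_alg E0 E1"
  shows "fa_mult f g \<in> free_alg E0 E1"
proof -
  have "{w. fa_mult f g w \<noteq> 0} \<subseteq> (\<lambda>(a,b). a @ b) ` ({w. f w \<noteq> 0} \<times> {w. g w \<noteq> 0})"
  proof
    fix w assume "w \<in> {w. fa_mult f g w \<noteq> 0}"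
    then obtain i where "f (take i w) \<noteq> 0" "g (drop i w) \<noteq> 0"
      using fa_mult_nonzero by blast
    then show "w \<in> (\<lambda>(a,b). a @ b) ` ({w. f w \<noteq> 0} \<times> {w. g w \<noteq> 0})"
      by (auto intro!: image_eqI[where x="(take i w, drop i w)"])
  qed
  moreover have "finite ((\<lambda>(a,b). a @ b) ` ({w. f w \<noteq> 0} \<times> {w. g w \<noteq> 0}))"
    using f g by (auto simp: free_alg_def)
  moreover have "fa_mult f g w \<noteq> 0 \<Longrightarrow> w \<noteq> [] \<and> set w \<subseteq> lgens E0 E1" for w
  proof -
    assume "fa_mult f g w \<noteq> 0"
    then obtain i where i: "f (take i w) \<noteq> 0" "g (drop i w) \<noteq> 0"
      using fa_mult_nonzero by blast
    then have "take i w \<noteq> []" "set (take i w) \<subseteq> lgens E0 E1" "set (drop i w) \<subseteq> lgens E0 E1"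
      using f g by (auto simp: free_alg_def)
    then show ?thesis
      by (metis append_take_drop_id le_sup_iff set_append take_Nil)
  qed
  ultimately show ?thesis unfolding free_alg_def by (auto intro: finite_subset)
qed

lemma fa_mult_assoc_cm:
  "fa_mult (fa_mult (cm a u) (cm b v)) (cm c w) = fa_mult (cm a u) (fa_mult (cm b v) (cm c w))"
  by (simp add: fa_mult_cm mult.assoc)

lemma fa_mult_assoc:
  assumes f: "f \<in> free_alg E0 E1" and g: "g \<in> free_alg E0 E1" and h: "h \<in> free_alg E0 E1"
  shows "fa_mult (fa_mult f g) h = fa_mult f (fa_mult g h)"
  using f
proof (induction f rule: fa_alg_induct)
  case zero then show ?case by (simp add: fa_mult_def)
next
  case (step q a u)
  have "fa_mult (fa_mult (cm a u) g) h = fa_mult (cm a u) (fa_mult g h)"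
    using g
  proof (induction g rule: fa_alg_induct)
    case zero then show ?case by (simp add: fa_mult_def)
  next
    case (step q2 b v)
    have "fa_mult (fa_mult (cm a u) (cm b v)) h = fa_mult (cm a u) (fa_mult (cm b v) h)"
      using h
    proof (induction h rule: fa_alg_induct)
      case zero then show ?case by (simp add: fa_mult_def)
    next
      case (step q3 c w)
      then show ?case by (simp only: fa_mult_add_right fa_mult_assoc_cm)
    qed
    then show ?case using step by (simp only: fa_mult_add_right fa_mult_add_left)
  qed
  then show ?case using step by (simp only: fa_mult_add_left)
qed

lemma rels_FA: "x \<in> lpa_rels E0 E1 s r \<Longrightarrow> s ` E1 \<subseteq> E0 \<Longrightarrow> r ` E1 \<subseteq> E0 \<Longrightarrow> x \<in> free_alg E0 E1"
  unfolding lpa_rels_def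
  by (auto simp: lgens_def image_subset_iff intro!: FA_diff FA_monom FA_sum)

lemma ideal_FA: "x \<in> lpa_ideal E0 E1 s r \<Longrightarrow> s ` E1 \<subseteq> E0 \<Longrightarrow> r ` E1 \<subseteq> E0 \<Longrightarrow> x \<in> free_alg E0 E1"
  by (induction x rule: lpa_ideal.induct) (auto simp: rels_FA)

lemma I_uminus: "x \<in> lpa_ideal E0 E1 s r \<Longrightarrow> - x \<in> lpa_ideal E0 E1 s r"
proof -
  assume "x \<in> lpa_ideal E0 E1 s r"
  then have "(\<lambda>w. (-1) * x w) \<in> lpa_ideal E0 E1 s r" by (rule li_lsmult)
  then show ?thesis by (simp add: fun_Compl_def)
qed

lemma I_diff: "x \<in> lpa_ideal E0 E1 s r \<Longrightarrow> y \<in> lpa_ideal E0 E1 s r \<Longrightarrow> x - y \<in> lpa_ideal E0 E1 s r"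
  using li_add[OF _ I_uminus, of x E0 E1 s r y] by simp


context
  fixes E0 :: "'v set" and E1 :: "'e set" and s r :: "'e \<Rightarrow> 'v"
  assumes hs: "s ` E1 \<subseteq> E0" and hr: "r ` E1 \<subseteq> E0"
begin

lemma I_FA: "x \<in> lpa_ideal E0 E1 s r \<Longrightarrow> x \<in> free_alg E0 E1"
  using ideal_FA hs hr by blast

lemma cl_self: "p \<in> free_alg E0 E1 \<Longrightarrow> p \<in> lclass E0 E1 s r p"
  by (simp add: lclass_def li_zero)

lemma cl_eq: "p \<in> free_alg E0 E1 \<Longrightarrow> q \<in> free_alg E0 E1 \<Longrightarrow>
   lclass E0 E1 s r p = lclass E0 E1 s r q \<longleftrightarrow> p - q \<in> lpa_ideal E0 E1 s r"
proof
  assume p: "p \<in> free_alg E0 E1" and q: "q \<in> free_alg E0 E1"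
  show "lclass E0 E1 s r p = lclass E0 E1 s r q \<Longrightarrow> p - q \<in> lpa_ideal E0 E1 s r"
    using cl_self[OF p] by (auto simp: lclass_def)
  assume pq: "p - q \<in> lpa_ideal E0 E1 s r"
  have "h - p \<in> lpa_ideal E0 E1 s r \<longleftrightarrow> h - q \<in> lpa_ideal E0 E1 s r" for h :: "('v,'e) lgen list \<Rightarrow> 'a"
  proof
    assume "h - p \<in> lpa_ideal E0 E1 s r"
    from li_add[OF this pq] show "h - q \<in> lpa_ideal E0 E1 s r" by simp
  next
    assume "h - q \<in> lpa_ideal E0 E1 s r"
    from I_diff[OF this pq] show "h - p \<in> lpa_ideal E0 E1 s r" by simp
  qed
  then show "lclass E0 E1 s r p = lclass E0 E1 s r q" by (auto simp: lclass_def)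
qed

lemma cl_eqI: "p \<in> free_alg E0 E1 \<Longrightarrow> q \<in> free_alg E0 E1 \<Longrightarrow> p - q \<in> lpa_ideal E0 E1 s r \<Longrightarrow>
   lclass E0 E1 s r p = lclass E0 E1 s r q"
  using cl_eq by blast

lemma some_cl:
  assumes p: "p \<in> free_alg E0 E1"
  shows "(SOME x. x \<in> lclass E0 E1 s r p) \<in> free_alg E0 E1
    \<and> (SOME x. x \<in> lclass E0 E1 s r p) - p \<in> lpa_ideal E0 E1 s r"
proof -
  have "(SOME x. x \<in> lclass E0 E1 s r p) \<in> lclass E0 E1 s r p"
    using cl_self[OF p] by (rule someI[where x=p])
  then show ?thesis by (simp add: lclass_def)
qed

lemma lpa_carrier: "carrier (lpa E0 E1 s r) = lclass E0 E1 s r ` free_alg E0 E1"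
  by (simp add: lpa_def)

lemma lpa_zero: "zero (lpa E0 E1 s r) = lclass E0 E1 s r 0"
  by (simp add: lpa_def)

lemma lpa_add:
  assumes p: "p \<in> free_alg E0 E1" and q: "q \<in> free_alg E0 E1"
  shows "add (lpa E0 E1 s r) (lclass E0 E1 s r p) (lclass E0 E1 s r q) = lclass E0 E1 s r (p + q)"
proof -
  let ?p = "SOME x. x \<in> lclass E0 E1 s r p" and ?q = "SOME x. x \<in> lclass E0 E1 s r q"
  have a: "?p \<in> free_alg E0 E1" "?p - p \<in> lpa_ideal E0 E1 s r" using some_cl[OF p] by auto
  have b: "?q \<in> free_alg E0 E1" "?q - q \<in> lpa_ideal E0 E1 s r" using some_cl[OF q] by auto
  have eq: "(?p + ?q) - (p + q) = (?p - p) + (?q - q)" by (simp add: algebra_simps)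
  have "(?p + ?q) - (p + q) \<in> lpa_ideal E0 E1 s r" unfolding eq by (rule li_add[OF a(2) b(2)])
  then have "lclass E0 E1 s r (?p + ?q) = lclass E0 E1 s r (p + q)"
    using a b p q by (intro cl_eqI) auto
  moreover have "add (lpa E0 E1 s r) (lclass E0 E1 s r p) (lclass E0 E1 s r q) = lclass E0 E1 s r (?p + ?q)"
    by (simp only: lpa_def ring.simps monoid.simps)
  ultimately show ?thesis by simp
qed

lemma lpa_mult:
  assumes p: "p \<in> free_alg E0 E1" and q: "q \<in> free_alg E0 E1"
  shows "mult (lpa E0 E1 s r) (lclass E0 E1 s r p) (lclass E0 E1 s r q) = lclass E0 E1 s r (fa_mult p q)"
proof -
  let ?p = "SOME x. x \<in> lclass E0 E1 s r p" and ?q = "SOME x. x \<in> lclass E0 E1 s r q"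
  have a: "?p \<in> free_alg E0 E1" "?p - p \<in> lpa_ideal E0 E1 s r" using some_cl[OF p] by auto
  have b: "?q \<in> free_alg E0 E1" "?q - q \<in> lpa_ideal E0 E1 s r" using some_cl[OF q] by auto
  have "fa_mult ?p ?q - fa_mult p q = fa_mult (?p - p) ?q + fa_mult p (?q - q)"
    by (simp add: fa_mult_diff_left fa_mult_diff_right)
  moreover have "fa_mult (?p - p) ?q \<in> lpa_ideal E0 E1 s r" using li_rmult[OF a(2) b(1)] .
  moreover have "fa_mult p (?q - q) \<in> lpa_ideal E0 E1 s r" using li_lmult[OF b(2) p] .
  ultimately have "fa_mult ?p ?q - fa_mult p q \<in> lpa_ideal E0 E1 s r" by (metis li_add)
  then have "lclass E0 E1 s r (fa_mult ?p ?q) = lclass E0 E1 s r (fa_mult p q)"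
    using a b p q by (intro cl_eqI) auto
  moreover have "mult (lpa E0 E1 s r) (lclass E0 E1 s r p) (lclass E0 E1 s r q) = lclass E0 E1 s r (fa_mult ?p ?q)"
    by (simp only: lpa_def ring.simps monoid.simps)
  ultimately show ?thesis by simp
qed


lemma carrier_obtain:
  assumes "X \<in> carrier (lpa E0 E1 s r)"
  obtains p where "p \<in> free_alg E0 E1" "X = lclass E0 E1 s r p"
  using assms by (auto simp: lpa_carrier)

lemma cl_carrier[simp]: "p \<in> free_alg E0 E1 \<Longrightarrow> lclass E0 E1 s r p \<in> carrier (lpa E0 E1 s r)"
  by (simp add: lpa_carrier)

lemma lpa_zero_carrier[simp]: "\<zero>\<^bsub>lpa E0 E1 s r\<^esub> \<in> carrier (lpa E0 E1 s r)"
  by (simp add: lpa_zero)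

lemma lpa_add_closed[simp]:
  "X \<in> carrier (lpa E0 E1 s r) \<Longrightarrow> Y \<in> carrier (lpa E0 E1 s r) \<Longrightarrow> X \<oplus>\<^bsub>lpa E0 E1 s r\<^esub> Y \<in> carrier (lpa E0 E1 s r)"
  by (auto elim!: carrier_obtain simp: lpa_add)

lemma lpa_mult_closed[simp]:
  "X \<in> carrier (lpa E0 E1 s r) \<Longrightarrow> Y \<in> carrier (lpa E0 E1 s r) \<Longrightarrow> X \<otimes>\<^bsub>lpa E0 E1 s r\<^esub> Y \<in> carrier (lpa E0 E1 s r)"
  by (auto elim!: carrier_obtain simp: lpa_mult)

lemma lpa_add_assoc:
  "X \<in> carrier (lpa E0 E1 s r) \<Longrightarrow> Y \<in> carrier (lpa E0 E1 s r) \<Longrightarrow> Z \<in> carrier (lpa E0 E1 s r) \<Longrightarrow>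
   (X \<oplus>\<^bsub>lpa E0 E1 s r\<^esub> Y) \<oplus>\<^bsub>lpa E0 E1 s r\<^esub> Z = X \<oplus>\<^bsub>lpa E0 E1 s r\<^esub> (Y \<oplus>\<^bsub>lpa E0 E1 s r\<^esub> Z)"
  by (auto elim!: carrier_obtain simp: lpa_add add.assoc)

lemma lpa_add_comm:
  "X \<in> carrier (lpa E0 E1 s r) \<Longrightarrow> Y \<in> carrier (lpa E0 E1 s r) \<Longrightarrow>
   X \<oplus>\<^bsub>lpa E0 E1 s r\<^esub> Y = Y \<oplus>\<^bsub>lpa E0 E1 s r\<^esub> X"
  by (auto elim!: carrier_obtain simp: lpa_add add.commute)

lemma lpa_add_zero:
  "X \<in> carrier (lpa E0 E1 s r) \<Longrightarrow> \<zero>\<^bsub>lpa E0 E1 s r\<^esub> \<oplus>\<^bsub>lpa E0 E1 s r\<^esub> X = X"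
  by (auto elim!: carrier_obtain simp: lpa_add lpa_zero)

lemma lpa_mult_assoc:
  "X \<in> carrier (lpa E0 E1 s r) \<Longrightarrow> Y \<in> carrier (lpa E0 E1 s r) \<Longrightarrow> Z \<in> carrier (lpa E0 E1 s r) \<Longrightarrow>
   (X \<otimes>\<^bsub>lpa E0 E1 s r\<^esub> Y) \<otimes>\<^bsub>lpa E0 E1 s r\<^esub> Z = X \<otimes>\<^bsub>lpa E0 E1 s r\<^esub> (Y \<otimes>\<^bsub>lpa E0 E1 s r\<^esub> Z)"
  by (auto elim!: carrier_obtain simp: lpa_mult fa_mult_assoc)

lemma lpa_distl:
  "X \<in> carrier (lpa E0 E1 s r) \<Longrightarrow> Y \<in> carrier (lpa E0 E1 s r) \<Longrightarrow> Z \<in> carrier (lpa E0 E1 s r) \<Longrightarrow>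
   X \<otimes>\<^bsub>lpa E0 E1 s r\<^esub> (Y \<oplus>\<^bsub>lpa E0 E1 s r\<^esub> Z) = (X \<otimes>\<^bsub>lpa E0 E1 s r\<^esub> Y) \<oplus>\<^bsub>lpa E0 E1 s r\<^esub> (X \<otimes>\<^bsub>lpa E0 E1 s r\<^esub> Z)"
  by (auto elim!: carrier_obtain simp: lpa_mult lpa_add fa_mult_add_right)

lemma lpa_distr:
  "X \<in> carrier (lpa E0 E1 s r) \<Longrightarrow> Y \<in> carrier (lpa E0 E1 s r) \<Longrightarrow> Z \<in> carrier (lpa E0 E1 s r) \<Longrightarrow>
   (Y \<oplus>\<^bsub>lpa E0 E1 s r\<^esub> Z) \<otimes>\<^bsub>lpa E0 E1 s r\<^esub> X = (Y \<otimes>\<^bsub>lpa E0 E1 s r\<^esub> X) \<oplus>\<^bsub>lpa E0 E1 s r\<^esub> (Z \<otimes>\<^bsub>lpa E0 E1 s r\<^esub> X)"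
  by (auto elim!: carrier_obtain simp: lpa_mult lpa_add fa_mult_add_left)

lemma lpa_zero_mult:
  "X \<in> carrier (lpa E0 E1 s r) \<Longrightarrow> \<zero>\<^bsub>lpa E0 E1 s r\<^esub> \<otimes>\<^bsub>lpa E0 E1 s r\<^esub> X = \<zero>\<^bsub>lpa E0 E1 s r\<^esub>"
  by (auto elim!: carrier_obtain simp: lpa_mult lpa_zero)

lemma lpa_mult_zero:
  "X \<in> carrier (lpa E0 E1 s r) \<Longrightarrow> X \<otimes>\<^bsub>lpa E0 E1 s r\<^esub> \<zero>\<^bsub>lpa E0 E1 s r\<^esub> = \<zero>\<^bsub>lpa E0 E1 s r\<^esub>"
  by (auto elim!: carrier_obtain simp: lpa_mult lpa_zero)

lemma lpa_abelian_monoid: "abelian_monoid (lpa E0 E1 s r)"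
  by (intro abelian_monoidI lpa_add_assoc lpa_add_comm lpa_add_zero lpa_add_closed lpa_zero_carrier)

end




definition WI :: "('x list \<Rightarrow> 'r::{ring,monoid_mult}) set \<Rightarrow> 'x list \<Rightarrow> 'x list \<Rightarrow> bool" where
  "WI I u v \<longleftrightarrow> monom u - monom v \<in> I"
definition ZI :: "('x list \<Rightarrow> 'r::{ring,monoid_mult}) set \<Rightarrow> 'x list \<Rightarrow> bool" where
  "ZI I u \<longleftrightarrow> monom u \<in> I"

fun pth :: "'v set \<Rightarrow> 'e set \<Rightarrow> ('e \<Rightarrow> 'v) \<Rightarrow> ('e \<Rightarrow> 'v) \<Rightarrow> 'v \<Rightarrow> 'e list \<Rightarrow> bool" where
  "pth E0 E1 s r v [] = (v \<in> E0)"
| "pth E0 E1 s r v (e # a) = (e \<in> E1 \<and> s e = v \<and> pth E0 E1 s r (r e) a)"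

fun rng :: "('e \<Rightarrow> 'v) \<Rightarrow> 'v \<Rightarrow> 'e list \<Rightarrow> 'v" where
  "rng r v [] = v"
| "rng r v (e # a) = rng r (r e) a"

definition nfw :: "('e \<Rightarrow> 'v) \<Rightarrow> 'v \<Rightarrow> 'e list \<Rightarrow> 'e list \<Rightarrow> ('v,'e) lgen list" where
  "nfw r v a b = map LE a @ LV (rng r v a) # map LG (rev b)"

lemma rng_append: "rng r v (a @ b) = rng r (rng r v a) b"
  by (induction a arbitrary: v) auto

lemma rng_last: "a \<noteq> [] \<Longrightarrow> rng r v a = r (last a)"
proof (induction a arbitrary: v)
  case Nil then show ?case by simp
next
  case (Cons e a) then show ?case by (cases a) auto
qed

lemma gens_simps[simp]:
  "LV v \<in> lgens E0 E1 \<longleftrightarrow> v \<in> E0" "LE e \<in> lgens E0 E1 \<longleftrightarrow> e \<in> E1" "LG e \<in> lgens E0 E1 \<longleftrightarrow> e \<in> E1"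
  by (auto simp: lgens_def)

context
  fixes E0 :: "'v set" and E1 :: "'e set" and s r :: "'e \<Rightarrow> 'v"
    and Rt :: "'r::{ring,monoid_mult} itself"
  assumes hs: "s ` E1 \<subseteq> E0" and hr: "r ` E1 \<subseteq> E0"
begin

abbreviation II :: "(('v,'e) lgen list \<Rightarrow> 'r) set" where "II \<equiv> lpa_ideal E0 E1 s r"

lemma s_E0[simp]: "e \<in> E1 \<Longrightarrow> s e \<in> E0" using hs by auto
lemma r_E0[simp]: "e \<in> E1 \<Longrightarrow> r e \<in> E0" using hr by auto

lemma pth_E0: "pth E0 E1 s r v a \<Longrightarrow> v \<in> E0"
  by (cases a) auto

lemma pth_append: "pth E0 E1 s r v (a @ b) \<longleftrightarrow> pth E0 E1 s r v a \<and> pth E0 E1 s r (rng r v a) b"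
  by (induction a arbitrary: v) (auto dest: pth_E0)


lemma pth_rng: "pth E0 E1 s r v a \<Longrightarrow> rng r v a \<in> E0"
  by (induction a arbitrary: v) auto

lemma pth_E1: "pth E0 E1 s r v a \<Longrightarrow> set a \<subseteq> E1"
  by (induction a arbitrary: v) auto

lemma pth_gens: "pth E0 E1 s r v a \<Longrightarrow> set (map LE a) \<subseteq> lgens E0 E1"
  "pth E0 E1 s r v a \<Longrightarrow> set (map LG a) \<subseteq> lgens E0 E1"
  "pth E0 E1 s r v a \<Longrightarrow> set (map LG (rev a)) \<subseteq> lgens E0 E1"
  using pth_E1[of v a] by auto

lemma nfw_gens: "pth E0 E1 s r v a \<Longrightarrow> pth E0 E1 s r u b \<Longrightarrow> set (nfw r v a b) \<subseteq> lgens E0 E1"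
  unfolding nfw_def using pth_E1[of v a] pth_E1[of u b] pth_rng[of v a] by auto

lemma W_refl: "WI II u u"
  by (simp add: WI_def li_zero)

lemma W_sym: "WI II u v \<Longrightarrow> WI II v u"
  unfolding WI_def using I_uminus[of "monom u - monom v"] by simp

lemma W_trans: "WI II u v \<Longrightarrow> WI II v w \<Longrightarrow> WI II u w"
  unfolding WI_def using li_add[of "monom u - monom v" E0 E1 s r "monom v - monom w"] by simp

lemma Z_W: "ZI II u \<Longrightarrow> WI II u v \<Longrightarrow> ZI II v"
  unfolding WI_def ZI_def using I_diff[of "monom u" E0 E1 s r "monom u - monom v"] by simp

lemma W_left:
  assumes "set a \<subseteq> lgens E0 E1" "WI II u v"
  shows "WI II (a @ u) (a @ v)"
proof (cases "a = []")
  case True then show ?thesis using assms by simp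
next
  case False
  have "fa_mult (monom a) (monom u - monom v) \<in> II"
    using assms False by (intro li_lmult) (auto simp: WI_def)
  then show ?thesis by (simp add: WI_def fa_mult_diff_right monom_cm fa_mult_cm)
qed

lemma W_right:
  assumes "set a \<subseteq> lgens E0 E1" "WI II u v"
  shows "WI II (u @ a) (v @ a)"
proof (cases "a = []")
  case True then show ?thesis using assms by simp
next
  case False
  have "fa_mult (monom u - monom v) (monom a) \<in> II"
    using assms False by (intro li_rmult) (auto simp: WI_def)
  then show ?thesis by (simp add: WI_def fa_mult_diff_left monom_cm fa_mult_cm)
qed

lemma W_ctx:
  assumes "set a \<subseteq> lgens E0 E1" "set b \<subseteq> lgens E0 E1" "WI II u v"
  shows "WI II (a @ u @ b) (a @ v @ b)"
  using W_left[OF assms(1) W_right[OF assms(2,3)]] by simp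

lemma Z_left:
  assumes "set a \<subseteq> lgens E0 E1" "ZI II u"
  shows "ZI II (a @ u)"
proof (cases "a = []")
  case True then show ?thesis using assms by simp
next
  case False
  have "fa_mult (monom a) (monom u) \<in> II"
    using assms False by (intro li_lmult) (auto simp: ZI_def)
  then show ?thesis by (simp add: ZI_def monom_cm fa_mult_cm)
qed

lemma Z_right:
  assumes "set a \<subseteq> lgens E0 E1" "ZI II u"
  shows "ZI II (u @ a)"
proof (cases "a = []")
  case True then show ?thesis using assms by simp
next
  case False
  have "fa_mult (monom u) (monom a) \<in> II"
    using assms False by (intro li_rmult) (auto simp: ZI_def)
  then show ?thesis by (simp add: ZI_def monom_cm fa_mult_cm)
qed

lemma Z_ctx:
  assumes "set a \<subseteq> lgens E0 E1" "set b \<subseteq> lgens E0 E1" "ZI II u"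
  shows "ZI II (a @ u @ b)"
  using Z_left[OF assms(1) Z_right[OF assms(2,3)]] by simp

lemma rel_I: "x \<in> lpa_rels E0 E1 s r \<Longrightarrow> x \<in> II"
  by (rule li_rel)

lemma R_vert: "u \<in> E0 \<Longrightarrow> v \<in> E0 \<Longrightarrow>
  monom [LV u, LV v] - (if u = v then monom [LV u] else 0) \<in> II"
  by (rule rel_I) (unfold lpa_rels_def, blast)

lemma R_vv: "u \<in> E0 \<Longrightarrow> WI II [LV u, LV u] [LV u]"
  using R_vert[of u u] by (simp add: WI_def)

lemma R_vv0: "u \<in> E0 \<Longrightarrow> v \<in> E0 \<Longrightarrow> u \<noteq> v \<Longrightarrow> ZI II [LV u, LV v]"
  using R_vert[of u v] by (simp add: ZI_def)

lemma R_se: "e \<in> E1 \<Longrightarrow> WI II [LV (s e), LE e] [LE e]"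
  unfolding WI_def by (rule rel_I) (unfold lpa_rels_def, blast)
lemma R_er: "e \<in> E1 \<Longrightarrow> WI II [LE e, LV (r e)] [LE e]"
  unfolding WI_def by (rule rel_I) (unfold lpa_rels_def, blast)
lemma R_rg: "e \<in> E1 \<Longrightarrow> WI II [LV (r e), LG e] [LG e]"
  unfolding WI_def by (rule rel_I) (unfold lpa_rels_def, blast)
lemma R_gs: "e \<in> E1 \<Longrightarrow> WI II [LG e, LV (s e)] [LG e]"
  unfolding WI_def by (rule rel_I) (unfold lpa_rels_def, blast)

lemma R_gf_gen: "e \<in> E1 \<Longrightarrow> f \<in> E1 \<Longrightarrow>
  monom [LG e, LE f] - (if e = f then monom [LV (r e)] else 0) \<in> II"
  by (rule rel_I) (unfold lpa_rels_def, blast)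

lemma R_ge: "e \<in> E1 \<Longrightarrow> WI II [LG e, LE e] [LV (r e)]"
  using R_gf_gen[of e e] by (simp add: WI_def)
lemma R_gf: "e \<in> E1 \<Longrightarrow> f \<in> E1 \<Longrightarrow> e \<noteq> f \<Longrightarrow> ZI II [LG e, LE f]"
  using R_gf_gen[of e f] by (simp add: ZI_def)


lemma W_ctx':
  assumes "WI II u v" "set a \<subseteq> lgens E0 E1" "set b \<subseteq> lgens E0 E1"
    "L = a @ u @ b" "R = a @ v @ b"
  shows "WI II L R"
  using W_ctx[OF assms(2,3,1)] assms(4,5) by simp

lemma Z_ctx':
  assumes "ZI II u" "set a \<subseteq> lgens E0 E1" "set b \<subseteq> lgens E0 E1" "L = a @ u @ b"
  shows "ZI II L"
  using Z_ctx[OF assms(2,3,1)] assms(4) by simp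

lemma VL:
  assumes "pth E0 E1 s r x g"
  shows "WI II (LV x # map LE g @ [LV (rng r x g)]) (map LE g @ [LV (rng r x g)])"
proof (cases g)
  case Nil then show ?thesis using assms by (simp add: R_vv)
next
  case (Cons e g')
  then have e: "e \<in> E1" "s e = x" "pth E0 E1 s r (r e) g'" using assms by auto
  show ?thesis
    by (rule W_ctx'[OF R_se[OF e(1)], of "[]" "map LE g' @ [LV (rng r x g)]"])
      (use e Cons pth_gens[OF e(3)] pth_rng[OF assms] in auto)
qed

lemma VR:
  assumes "pth E0 E1 s r x g"
  shows "WI II (LV (rng r x g) # map LG (rev g) @ [LV x]) (LV (rng r x g) # map LG (rev g))"
proof (cases g)
  case Nil then show ?thesis using assms by (simp add: R_vv pth_E0)
next
  case (Cons e g')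
  then have e: "e \<in> E1" "s e = x" "pth E0 E1 s r (r e) g'" using assms by auto
  show ?thesis
    by (rule W_ctx'[OF R_gs[OF e(1)], of "LV (rng r x g) # map LG (rev g')" "[]"])
      (use e Cons pth_gens[OF e(3)] pth_rng[OF assms] in auto)
qed

lemma KEY0:
  assumes "pth E0 E1 s r u b" "b \<noteq> []"
  shows "WI II (map LG (rev b) @ map LE b) [LV (rng r u b)]"
  using assms
proof (induction b arbitrary: u)
  case Nil then show ?case by simp
next
  case (Cons e b')
  then have e: "e \<in> E1" "s e = u" "pth E0 E1 s r (r e) b'" by auto
  have gb: "set (map LG (rev b')) \<subseteq> lgens E0 E1" "set (map LE b') \<subseteq> lgens E0 E1"
    using pth_gens[OF e(3)] by auto
  have w1: "WI II (map LG (rev (e # b')) @ map LE (e # b')) (map LG (rev b') @ [LV (r e)] @ map LE b')"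
    by (rule W_ctx'[OF R_ge[OF e(1)] gb]) auto
  show ?case
  proof (cases b')
    case Nil then show ?thesis using w1 by simp
  next
    case (Cons f b'')
    then have f: "f \<in> E1" "s f = r e" "pth E0 E1 s r (r f) b''" using e by auto
    have w2: "WI II (map LG (rev b') @ [LV (r e)] @ map LE b') (map LG (rev b') @ map LE b')"
      by (rule W_ctx'[OF R_se[OF f(1)] gb(1), of "map LE b''"]) (use f Cons pth_gens[OF f(3)] in auto)
    have w3: "WI II (map LG (rev b') @ map LE b') [LV (rng r (r e) b')]"
      using Cons.IH[OF e(3)] Cons by simp
    show ?thesis using W_trans[OF w1 W_trans[OF w2 w3]] by simp
  qed
qed

lemma KEY1:
  assumes "pth E0 E1 s r u b" "x = rng r u b"
  shows "WI II (LV x # map LG (rev b) @ map LE b @ [LV x]) [LV x]"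
proof (cases "b = []")
  case True then show ?thesis using assms by (simp add: R_vv pth_E0)
next
  case False
  have x: "x \<in> E0" using pth_rng[OF assms(1)] assms(2) by simp
  have w1: "WI II (LV x # map LG (rev b) @ map LE b @ [LV x]) [LV x, LV x, LV x]"
    by (rule W_ctx'[OF KEY0[OF assms(1) False], of "[LV x]" "[LV x]"]) (use x assms in auto)
  have w2: "WI II [LV x, LV x, LV x] [LV x, LV x]"
    by (rule W_ctx'[OF R_vv[OF x], of "[]" "[LV x]"]) (use x in auto)
  show ?thesis using W_trans[OF w1 W_trans[OF w2 R_vv[OF x]]] .
qed


lemma INC:
  assumes "pth E0 E1 s r v k" "pth E0 E1 s r v' k'"
    "\<not> (v = v' \<and> (\<exists>g. k' = k @ g))" "\<not> (v = v' \<and> (\<exists>g. k = k' @ g))"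
  shows "ZI II (map LG (rev k) @ [LV v, LV v'] @ map LE k')"
  using assms
proof (induction k arbitrary: v v' k')
  case Nil
  then have "v \<noteq> v'" by auto
  then show ?case
    by (intro Z_ctx'[OF R_vv0, of v v' "[]" "map LE k'"])
      (use Nil pth_E0 pth_gens in auto)
next
  case (Cons e t)
  then have e: "e \<in> E1" "s e = v" "pth E0 E1 s r (r e) t" by auto
  have gk: "set (map LG (rev (e # t))) \<subseteq> lgens E0 E1" "set (map LE k') \<subseteq> lgens E0 E1"
    using pth_gens[OF Cons.prems(1)] pth_gens[OF Cons.prems(2)] by auto
  show ?case
  proof (cases "v = v'")
    case False
    then show ?thesis
      by (intro Z_ctx'[OF R_vv0 gk]) (use Cons.prems pth_E0 in auto)
  next
    case True
    then obtain f t' where k': "k' = f # t'" using Cons.prems(4) by (cases k') auto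
    then have f: "f \<in> E1" "s f = v" "pth E0 E1 s r (r f) t'" using Cons.prems(2) True by auto
    have gt: "set (map LG (rev t)) \<subseteq> lgens E0 E1" "set (map LE t') \<subseteq> lgens E0 E1"
      using pth_gens[OF e(3)] pth_gens[OF f(3)] by auto
    have v: "v \<in> E0" using e by auto
    have w1: "WI II [LG e, LV v, LV v, LE f] [LG e, LV v, LE f]"
      by (rule W_ctx'[OF R_vv[OF v], of "[LG e]" "[LE f]"]) (use e f v in auto)
    have w2: "WI II [LG e, LV v, LE f] [LG e, LE f]"
      by (rule W_ctx'[OF R_se[OF f(1)], of "[LG e]" "[]"]) (use e f v in auto)
    have w12: "WI II (map LG (rev t) @ [LG e, LV v, LV v, LE f] @ map LE t')
                      (map LG (rev t) @ [LG e, LE f] @ map LE t')"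
      by (rule W_ctx'[OF W_trans[OF w1 w2] gt]) auto
    have eq: "map LG (rev (e # t)) @ [LV v, LV v'] @ map LE k' = map LG (rev t) @ [LG e, LV v, LV v, LE f] @ map LE t'"
      using True k' by simp
    show ?thesis
    proof (cases "e = f")
      case False
      have "ZI II (map LG (rev t) @ [LG e, LE f] @ map LE t')"
        by (rule Z_ctx'[OF R_gf[OF e(1) f(1) False] gt]) simp
      then show ?thesis using Z_W[OF _ W_sym[OF w12]] eq by simp
    next
      case ef: True
      have re: "r e \<in> E0" using e by simp
      have w3: "WI II [LG e, LE f] [LV (r e), LV (r e)]"
        using W_trans[OF R_ge[OF e(1)] W_sym[OF R_vv[OF re]]] ef by simp
      have w4: "WI II (map LG (rev t) @ [LG e, LE f] @ map LE t') (map LG (rev t) @ [LV (r e), LV (r e)] @ map LE t')"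
        by (rule W_ctx'[OF w3 gt]) auto
      have "ZI II (map LG (rev t) @ [LV (r e), LV (r e)] @ map LE t')"
        by (rule Cons.IH[OF e(3)]) (use f ef Cons.prems(3,4) True k' in auto)
      then show ?thesis using Z_W[OF _ W_sym[OF W_trans[OF w12 w4]]] eq by simp
    qed
  qed
qed

lemma C2:
  assumes "pth E0 E1 s r v a" "pth E0 E1 s r u b" "pth E0 E1 s r w c"
    "rng r v a = rng r u b" "rng r w c = rng r u b"
  shows "WI II (nfw r v a b @ nfw r u b c) (nfw r v a c)"
  by (rule W_ctx'[OF KEY1[OF assms(2) refl], of "map LE a" "map LG (rev c)"])
    (use assms pth_gens in \<open>auto simp: nfw_def\<close>)

lemma C3:
  assumes "pth E0 E1 s r v (k @ g)" "pth E0 E1 s r u n" "rng r v (k @ g) = rng r u n"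
  shows "WI II (nfw r v k k @ nfw r v (k @ g) n) (nfw r v (k @ g) n)"
proof -
  have k: "pth E0 E1 s r v k" and g: "pth E0 E1 s r (rng r v k) g" using assms(1) pth_append by auto
  let ?x = "rng r v k" and ?y = "rng r v (k @ g)"
  have y: "?y = rng r ?x g" by (simp add: rng_append)
  have gk: "set (map LE k) \<subseteq> lgens E0 E1" "set (map LG (rev k)) \<subseteq> lgens E0 E1"
    "set (map LE g) \<subseteq> lgens E0 E1" "set (map LG (rev n)) \<subseteq> lgens E0 E1"
    using pth_gens[OF k] pth_gens[OF g] pth_gens[OF assms(2)] by auto
  have x: "?x \<in> E0" using pth_rng[OF k] .
  have w1: "WI II (nfw r v k k @ nfw r v (k @ g) n)
      ((map LE k @ LV ?x # map LG (rev k) @ map LE k) @ (LV ?x # map LE g @ [LV ?y]) @ map LG (rev n))"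
    by (rule W_ctx'[OF W_sym[OF VL[OF g]], of "map LE k @ LV ?x # map LG (rev k) @ map LE k" "map LG (rev n)"]) (use gk x y in \<open>auto simp: nfw_def\<close>)
  have w2: "WI II ((map LE k @ LV ?x # map LG (rev k) @ map LE k) @ (LV ?x # map LE g @ [LV ?y]) @ map LG (rev n))
       (map LE k @ [LV ?x] @ (map LE g @ [LV ?y] @ map LG (rev n)))"
    by (rule W_ctx'[OF KEY1[OF k refl], of "map LE k" "map LE g @ [LV ?y] @ map LG (rev n)"]) (use gk x y pth_rng[OF assms(1)] in auto)
  have w3: "WI II (map LE k @ [LV ?x] @ (map LE g @ [LV ?y] @ map LG (rev n))) (nfw r v (k @ g) n)"
    by (rule W_ctx'[OF VL[OF g], of "map LE k" "map LG (rev n)"]) (use gk x y pth_rng[OF assms(1)] in \<open>auto simp: nfw_def\<close>)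
  show ?thesis using W_trans[OF w1 W_trans[OF w2 w3]] .
qed

lemma C4:
  assumes "pth E0 E1 s r v (k @ g)" "pth E0 E1 s r w c" "rng r v (k @ g) = rng r w c"
  shows "WI II (nfw r w c (k @ g) @ nfw r v k k) (nfw r w c (k @ g))"
proof -
  have k: "pth E0 E1 s r v k" and g: "pth E0 E1 s r (rng r v k) g" using assms(1) pth_append by auto
  let ?x = "rng r v k" and ?y = "rng r v (k @ g)"
  have y: "?y = rng r ?x g" by (simp add: rng_append)
  have gk: "set (map LE k) \<subseteq> lgens E0 E1" "set (map LG (rev k)) \<subseteq> lgens E0 E1"
    "set (map LG (rev g)) \<subseteq> lgens E0 E1" "set (map LE c) \<subseteq> lgens E0 E1"
    using pth_gens[OF k] pth_gens[OF g] pth_gens[OF assms(2)] by auto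
  have x: "?x \<in> E0" using pth_rng[OF k] .
  have yw: "rng r w c = ?y" using assms(3) by simp
  have w1: "WI II (nfw r w c (k @ g) @ nfw r v k k)
      (map LE c @ (LV ?y # map LG (rev g) @ [LV ?x]) @ (map LG (rev k) @ map LE k @ LV ?x # map LG (rev k)))"
    by (rule W_ctx'[OF W_sym[OF VR[OF g]], of "map LE c" "map LG (rev k) @ map LE k @ LV ?x # map LG (rev k)"]) (use gk x y yw in \<open>auto simp: nfw_def\<close>)
  have w2: "WI II (map LE c @ (LV ?y # map LG (rev g) @ [LV ?x]) @ (map LG (rev k) @ map LE k @ LV ?x # map LG (rev k)))
      ((map LE c @ LV ?y # map LG (rev g)) @ [LV ?x] @ map LG (rev k))"
    by (rule W_ctx'[OF KEY1[OF k refl], of "map LE c @ LV ?y # map LG (rev g)" "map LG (rev k)"]) (use gk x y pth_rng[OF assms(1)] in auto)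
  have w3: "WI II ((map LE c @ LV ?y # map LG (rev g)) @ [LV ?x] @ map LG (rev k)) (nfw r w c (k @ g))"
    by (rule W_ctx'[OF VR[OF g], of "map LE c" "map LG (rev k)"]) (use gk x y yw pth_rng[OF assms(1)] in \<open>auto simp: nfw_def\<close>)
  show ?thesis using W_trans[OF w1 W_trans[OF w2 w3]] .
qed

lemma C5:
  assumes "pth E0 E1 s r v k" "pth E0 E1 s r v' k'"
    "\<not> (v = v' \<and> (\<exists>g. k' = k @ g))" "\<not> (v = v' \<and> (\<exists>g. k = k' @ g))"
  shows "ZI II (nfw r v k k @ nfw r v' k' k')"
proof -
  let ?x = "rng r v k" and ?x' = "rng r v' k'"
  have gk: "set (map LE k) \<subseteq> lgens E0 E1" "set (map LG (rev k)) \<subseteq> lgens E0 E1"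
    "set (map LE k') \<subseteq> lgens E0 E1" "set (map LG (rev k')) \<subseteq> lgens E0 E1"
    using pth_gens[OF assms(1)] pth_gens[OF assms(2)] by auto
  have x: "?x \<in> E0" "?x' \<in> E0" "v \<in> E0" "v' \<in> E0"
    using pth_rng[OF assms(1)] pth_rng[OF assms(2)] pth_E0[OF assms(1)] pth_E0[OF assms(2)] by auto
  have z: "ZI II ((map LE k @ [LV ?x]) @ (map LG (rev k) @ [LV v, LV v'] @ map LE k') @ (LV ?x' # map LG (rev k')))"
    by (rule Z_ctx'[OF INC[OF assms], of "map LE k @ [LV ?x]" "LV ?x' # map LG (rev k')"]) (use gk x in auto)
  have w1: "WI II ((map LE k @ [LV ?x]) @ (map LG (rev k) @ [LV v, LV v'] @ map LE k') @ (LV ?x' # map LG (rev k')))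
     (map LE k @ (LV ?x # map LG (rev k)) @ (LV v' # map LE k' @ LV ?x' # map LG (rev k')))"
    by (rule W_ctx'[OF VR[OF assms(1)], of "map LE k" "LV v' # map LE k' @ LV ?x' # map LG (rev k')"]) (use gk x in auto)
  have w2: "WI II (map LE k @ (LV ?x # map LG (rev k)) @ (LV v' # map LE k' @ LV ?x' # map LG (rev k')))
     (nfw r v k k @ nfw r v' k' k')"
    by (rule W_ctx'[OF VL[OF assms(2)], of "map LE k @ LV ?x # map LG (rev k)" "map LG (rev k')"])
      (use gk x in \<open>auto simp: nfw_def\<close>)
  show ?thesis using Z_W[OF z W_trans[OF w1 w2]] .
qed

end




lemma word_deg_Nil[simp]: "word_deg G d [] = \<one>\<^bsub>G\<^esub>"
  by (simp add: word_deg_def)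
lemma word_deg_Cons[simp]: "word_deg G d (a # w) = gen_deg G d a \<otimes>\<^bsub>G\<^esub> word_deg G d w"
  by (simp add: word_deg_def)

lemma nfw_Nil: "nfw r v [] b = LV v # map LG (rev b)"
  by (simp add: nfw_def)
lemma nfw_Cons: "nfw r v (e # a) b = LE e # nfw r (r e) a b"
  by (simp add: nfw_def)

definition NFok where
  "NFok E0 E1 s r I G d w v a u b \<longleftrightarrow> pth E0 E1 s r v a \<and> pth E0 E1 s r u b \<and> rng r v a = rng r u b
     \<and> WI I w (nfw r v a b) \<and> word_deg G d w = word_deg G d (nfw r v a b)"

context
  fixes E0 :: "'v set" and E1 :: "'e set" and s r :: "'e \<Rightarrow> 'v"
    and Rt :: "'r::{ring,monoid_mult} itself"
    and G :: "('g, 'b) monoid_scheme" and d :: "'e \<Rightarrow> 'g"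
  assumes hs: "s ` E1 \<subseteq> E0" and hr: "r ` E1 \<subseteq> E0"
    and grp: "group G" and hd: "d ` E1 \<subseteq> carrier G"
begin

abbreviation ple :: "'e list \<Rightarrow> ('v,'e) lgen list" where "ple a \<equiv> map LE a"

abbreviation plg :: "'e list \<Rightarrow> ('v,'e) lgen list" where "plg b \<equiv> map LG (rev b)"

abbreviation IIb :: "(('v,'e) lgen list \<Rightarrow> 'r) set" where "IIb \<equiv> lpa_ideal E0 E1 s r"

lemma gen_deg_carrier: "a \<in> lgens E0 E1 \<Longrightarrow> gen_deg G d a \<in> carrier G"
  using hd grp by (auto simp: lgens_def group.inv_closed monoid.one_closed group.is_monoid)

lemma word_deg_carrier: "set w \<subseteq> lgens E0 E1 \<Longrightarrow> word_deg G d w \<in> carrier G"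
  using grp by (induction w) (auto simp: gen_deg_carrier group.is_monoid monoid.m_closed monoid.one_closed)

lemma word_deg_append: "set u \<subseteq> lgens E0 E1 \<Longrightarrow> set w \<subseteq> lgens E0 E1 \<Longrightarrow>
    word_deg G d (u @ w) = word_deg G d u \<otimes>\<^bsub>G\<^esub> word_deg G d w"
proof (induction u)
  case Nil then show ?case using grp word_deg_carrier[of w] by (simp add: group.is_monoid monoid.l_one)
next
  case (Cons a u)
  then show ?case using grp gen_deg_carrier[of a] word_deg_carrier[of u] word_deg_carrier[of w]
    by (simp add: group.is_monoid monoid.m_assoc)
qed

lemma word_deg_LG: "set b \<subseteq> E1 \<Longrightarrow> word_deg G d (plg b) = inv\<^bsub>G\<^esub> (word_deg G d (ple b))"
proof (induction b)
  case Nil then show ?case using grp by (simp add: monoid.inv_one group.is_monoid)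
next
  case (Cons e b)
  have "set (ple b) \<subseteq> lgens E0 E1" using Cons.prems by auto
  then have c: "d e \<in> carrier G" "word_deg G d (ple b) \<in> carrier G"
    using Cons.prems hd word_deg_carrier by auto
  have "word_deg G d (plg (e # b)) = word_deg G d (plg b) \<otimes>\<^bsub>G\<^esub> word_deg G d ([LG e] :: ('v,'e) lgen list)"
    using word_deg_append[of "plg b" "[LG e]"] Cons.prems by (auto simp: image_subset_iff)
  also have "\<dots> = inv\<^bsub>G\<^esub> (word_deg G d (ple b)) \<otimes>\<^bsub>G\<^esub> inv\<^bsub>G\<^esub> (d e)"
    using Cons grp c by (simp add: group.is_monoid monoid.r_one group.inv_closed)
  also have "\<dots> = inv\<^bsub>G\<^esub> (d e \<otimes>\<^bsub>G\<^esub> word_deg G d (ple b))"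
    using grp c by (simp add: group.inv_mult_group)
  finally show ?case by simp
qed

lemma word_deg_nfw:
  assumes "pth E0 E1 s r v a" "pth E0 E1 s r u b"
  shows "word_deg G d (nfw r v a b) = word_deg G d (ple a) \<otimes>\<^bsub>G\<^esub> inv\<^bsub>G\<^esub> (word_deg G d (ple b))"
proof -
  have g: "set (map LE a) \<subseteq> lgens E0 E1" "set (map LG (rev b)) \<subseteq> lgens E0 E1" "set b \<subseteq> E1"
    using pth_gens[OF hs hr assms(1)] pth_gens[OF hs hr assms(2)] pth_E1[OF hs hr assms(2)] by auto
  have "word_deg G d (nfw r v a b) = word_deg G d (ple a) \<otimes>\<^bsub>G\<^esub> word_deg G d (plg b)"
    unfolding nfw_def
    using word_deg_append[OF g(1), of "LV (rng r v a) # map LG (rev b)"] g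
      grp word_deg_carrier[OF g(2)] pth_rng[OF hs hr assms(1)]
    by (simp add: group.is_monoid monoid.l_one)
  then show ?thesis using word_deg_LG[OF g(3)] by metis
qed


lemmas hW_refl = W_refl[OF hs hr] and hW_sym = W_sym[OF hs hr] and hW_trans = W_trans[OF hs hr]
  and hZ_W = Z_W[OF hs hr] and hW_ctx = W_ctx'[OF hs hr] and hZ_ctx = Z_ctx'[OF hs hr]
  and hR_vv = R_vv[OF hs hr] and hR_vv0 = R_vv0[OF hs hr] and hR_se = R_se[OF hs hr]
  and hR_er = R_er[OF hs hr] and hR_rg = R_rg[OF hs hr] and hR_gs = R_gs[OF hs hr]
  and hR_ge = R_ge[OF hs hr] and hR_gf = R_gf[OF hs hr] and hVL = VL[OF hs hr]
  and hpth_E0 = pth_E0[OF hs hr] and hpth_rng = pth_rng[OF hs hr] and hpth_append = pth_append[OF hs hr]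
  and hnfw_gens = nfw_gens[OF hs hr] and hpth_gens = pth_gens[OF hs hr]

lemma hsE0[simp]: "e \<in> E1 \<Longrightarrow> s e \<in> E0" using hs by auto
lemma hrE0[simp]: "e \<in> E1 \<Longrightarrow> r e \<in> E0" using hr by auto

lemma wd_LV: "set w \<subseteq> lgens E0 E1 \<Longrightarrow> word_deg G d (LV y # w) = word_deg G d w"
  using word_deg_carrier[of w] grp by (simp add: group.is_monoid monoid.l_one)

lemma LM_V:
  assumes y: "y \<in> E0" and p: "pth E0 E1 s r v al" "pth E0 E1 s r u be" "rng r v al = rng r u be"
  shows "ZI IIb (LV y # nfw r v al be) \<or> (\<exists>v' al' u' be'. NFok E0 E1 s r IIb G d (LV y # nfw r v al be) v' al' u' be')"
proof (cases al)
  case Nil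
  have g: "set (map LG (rev be)) \<subseteq> lgens E0 E1" using hpth_gens[OF p(2)] by auto
  have v: "v \<in> E0" using hpth_E0[OF p(1)] .
  show ?thesis
  proof (cases "y = v")
    case True
    have "WI IIb (LV y # nfw r v al be) (nfw r v al be)"
      by (rule hW_ctx[OF hR_vv[OF v], of "[]" "map LG (rev be)"]) (use g True Nil in \<open>auto simp: nfw_Nil\<close>)
    moreover have "word_deg G d (LV y # nfw r v al be) = word_deg G d (nfw r v al be)"
      by (rule wd_LV) (use hnfw_gens[OF p(1,2)] in auto)
    ultimately show ?thesis using p unfolding NFok_def by blast
  next
    case False
    have "ZI IIb (LV y # nfw r v al be)"
      by (rule hZ_ctx[OF hR_vv0[OF y v False], of "[]" "map LG (rev be)"]) (use g Nil in \<open>auto simp: nfw_Nil\<close>)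
    then show ?thesis by blast
  qed
next
  case (Cons e al')
  then have e: "e \<in> E1" "s e = v" "pth E0 E1 s r (r e) al'" using p by auto
  have g: "set (nfw r (r e) al' be) \<subseteq> lgens E0 E1" using hnfw_gens[OF e(3) p(2)] .
  show ?thesis
  proof (cases "y = v")
    case True
    have "WI IIb (LV y # nfw r v al be) (nfw r v al be)"
      by (rule hW_ctx[OF hR_se[OF e(1)], of "[]" "nfw r (r e) al' be"]) (use g True Cons e in \<open>auto simp: nfw_Cons\<close>)
    moreover have "word_deg G d (LV y # nfw r v al be) = word_deg G d (nfw r v al be)"
      by (rule wd_LV) (use hnfw_gens[OF p(1,2)] in auto)
    ultimately show ?thesis using p unfolding NFok_def by blast
  next
    case False
    have "ZI IIb (LV y # LV (s e) # LE e # nfw r (r e) al' be)"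
      by (rule hZ_ctx[OF hR_vv0[OF y _ False], of "[]" "LE e # nfw r (r e) al' be"]) (use g e in auto)
    moreover have "WI IIb (LV y # LV (s e) # LE e # nfw r (r e) al' be) (LV y # nfw r v al be)"
      by (rule hW_ctx[OF hR_se[OF e(1)], of "[LV y]" "nfw r (r e) al' be"]) (use g e y Cons in \<open>auto simp: nfw_Cons\<close>)
    ultimately show ?thesis using hZ_W by blast
  qed
qed

lemma LM_E:
  assumes e: "e \<in> E1" and p: "pth E0 E1 s r v al" "pth E0 E1 s r u be" "rng r v al = rng r u be"
  shows "ZI IIb (LE e # nfw r v al be) \<or> (\<exists>v' al' u' be'. NFok E0 E1 s r IIb G d (LE e # nfw r v al be) v' al' u' be')"
proof (cases al)
  case Nil
  have g: "set (map LG (rev be)) \<subseteq> lgens E0 E1" using hpth_gens[OF p(2)] by auto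
  have v: "v \<in> E0" using hpth_E0[OF p(1)] .
  show ?thesis
  proof (cases "r e = v")
    case True
    have "NFok E0 E1 s r IIb G d (LE e # nfw r v al be) (s e) [e] u be"
      unfolding NFok_def using True Nil p e by (auto simp: nfw_Cons nfw_Nil hW_refl)
    then show ?thesis by blast
  next
    case False
    have "ZI IIb (LE e # LV (r e) # LV v # map LG (rev be))"
      by (rule hZ_ctx[OF hR_vv0[OF _ v False], of "[LE e]" "map LG (rev be)"]) (use g e in auto)
    moreover have "WI IIb (LE e # LV (r e) # LV v # map LG (rev be)) (LE e # nfw r v al be)"
      by (rule hW_ctx[OF hR_er[OF e], of "[]" "LV v # map LG (rev be)"]) (use g e v Nil in \<open>auto simp: nfw_Nil\<close>)
    ultimately show ?thesis using hZ_W by blast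
  qed
next
  case (Cons f al')
  then have f: "f \<in> E1" "s f = v" "pth E0 E1 s r (r f) al'" using p by auto
  have g: "set (nfw r (r f) al' be) \<subseteq> lgens E0 E1" using hnfw_gens[OF f(3) p(2)] .
  show ?thesis
  proof (cases "r e = s f")
    case True
    have "NFok E0 E1 s r IIb G d (LE e # nfw r v al be) (s e) (e # al) u be"
      unfolding NFok_def using True Cons p e f by (auto simp: nfw_Cons hW_refl)
    then show ?thesis by blast
  next
    case False
    have "ZI IIb (LE e # LV (r e) # LV (s f) # LE f # nfw r (r f) al' be)"
      by (rule hZ_ctx[OF hR_vv0[OF _ _ False], of "[LE e]" "LE f # nfw r (r f) al' be"]) (use g e f in auto)
    moreover have "WI IIb (LE e # LV (r e) # LV (s f) # LE f # nfw r (r f) al' be) (LE e # LV (r e) # LE f # nfw r (r f) al' be)"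
      by (rule hW_ctx[OF hR_se[OF f(1)], of "[LE e, LV (r e)]" "nfw r (r f) al' be"]) (use g e f in auto)
    moreover have "WI IIb (LE e # LV (r e) # LE f # nfw r (r f) al' be) (LE e # nfw r v al be)"
      by (rule hW_ctx[OF hR_er[OF e], of "[]" "LE f # nfw r (r f) al' be"]) (use g e f Cons in \<open>auto simp: nfw_Cons\<close>)
    ultimately show ?thesis using hZ_W hW_trans by blast
  qed
qed

lemma LM_G:
  assumes e: "e \<in> E1" and p: "pth E0 E1 s r v al" "pth E0 E1 s r u be" "rng r v al = rng r u be"
  shows "ZI IIb (LG e # nfw r v al be) \<or> (\<exists>v' al' u' be'. NFok E0 E1 s r IIb G d (LG e # nfw r v al be) v' al' u' be')"
proof (cases al)
  case Nil
  have g: "set (map LG (rev be)) \<subseteq> lgens E0 E1" using hpth_gens[OF p(2)] by auto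
  have v: "v \<in> E0" using hpth_E0[OF p(1)] .
  show ?thesis
  proof (cases "s e = v")
    case True
    have w1: "WI IIb (LG e # nfw r v al be) (LG e # map LG (rev be))"
      by (rule hW_ctx[OF hR_gs[OF e], of "[]" "map LG (rev be)"]) (use g e True Nil in \<open>auto simp: nfw_Nil\<close>)
    have w2: "WI IIb (LG e # map LG (rev be)) (nfw r (r e) [] (be @ [e]))"
      by (rule hW_ctx[OF hW_sym[OF hR_rg[OF e]], of "[]" "map LG (rev be)"]) (use g e in \<open>auto simp: nfw_Nil\<close>)
    have pb: "pth E0 E1 s r u (be @ [e])" using hpth_append p e True Nil by auto
    have rb: "rng r (r e) [] = rng r u (be @ [e])" using p True Nil by (simp add: rng_append)
    have gb: "set (map LG (rev be)) \<subseteq> lgens E0 E1" using g .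
    have "word_deg G d (LG e # nfw r v al be) = word_deg G d (nfw r (r e) [] (be @ [e]))"
    proof -
      have c: "word_deg G d (plg be) \<in> carrier G" "inv\<^bsub>G\<^esub> (d e) \<in> carrier G"
        using word_deg_carrier[OF gb] e hd grp by (auto simp: group.inv_closed)
      then show ?thesis using Nil grp by (simp add: nfw_Nil group.is_monoid monoid.l_one monoid.m_closed)
    qed
    then have "NFok E0 E1 s r IIb G d (LG e # nfw r v al be) (r e) [] u (be @ [e])"
      unfolding NFok_def using pb rb hW_trans[OF w1 w2] e hpth_rng[OF pb] by auto
    then show ?thesis by blast
  next
    case False
    have "ZI IIb (LG e # LV (s e) # LV v # map LG (rev be))"
      by (rule hZ_ctx[OF hR_vv0[OF _ v False], of "[LG e]" "map LG (rev be)"]) (use g e in auto)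
    moreover have "WI IIb (LG e # LV (s e) # LV v # map LG (rev be)) (LG e # nfw r v al be)"
      by (rule hW_ctx[OF hR_gs[OF e], of "[]" "LV v # map LG (rev be)"]) (use g e v Nil in \<open>auto simp: nfw_Nil\<close>)
    ultimately show ?thesis using hZ_W by blast
  qed
next
  case (Cons f al')
  then have f: "f \<in> E1" "s f = v" "pth E0 E1 s r (r f) al'" using p by auto
  have g: "set (nfw r (r f) al' be) \<subseteq> lgens E0 E1" using hnfw_gens[OF f(3) p(2)] .
  show ?thesis
  proof (cases "e = f")
    case True
    have w1: "WI IIb (LG e # nfw r v al be) (LV (r e) # nfw r (r f) al' be)"
      by (rule hW_ctx[OF hR_ge[OF e], of "[]" "nfw r (r f) al' be"]) (use g e True Cons in \<open>auto simp: nfw_Cons\<close>)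
    have w2: "WI IIb (LV (r e) # nfw r (r f) al' be) (nfw r (r f) al' be)"
      by (rule hW_ctx[OF hVL[OF f(3)], of "[]" "map LG (rev be)"]) (use g True hpth_gens[OF p(2)] in \<open>auto simp: nfw_def\<close>)
    have c: "d e \<in> carrier G" "word_deg G d (nfw r (r f) al' be) \<in> carrier G"
      using e hd word_deg_carrier[OF g] by auto
    have "word_deg G d (LG e # nfw r v al be) = word_deg G d (nfw r (r f) al' be)"
      using Cons True c grp by (simp add: nfw_Cons group.is_monoid monoid.m_assoc[symmetric] group.l_inv monoid.l_one group.inv_closed)
    then have "NFok E0 E1 s r IIb G d (LG e # nfw r v al be) (r f) al' u be"
      unfolding NFok_def using hW_trans[OF w1 w2] f p Cons True by auto
    then show ?thesis by blast
  next
    case False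
    have "ZI IIb (LG e # nfw r v al be)"
      by (rule hZ_ctx[OF hR_gf[OF e f(1) False], of "[]" "nfw r (r f) al' be"]) (use g Cons in \<open>auto simp: nfw_Cons\<close>)
    then show ?thesis by blast
  qed
qed

lemma NF:
  assumes "w \<noteq> []" "set w \<subseteq> lgens E0 E1"
  shows "ZI IIb w \<or> (\<exists>v al u be. NFok E0 E1 s r IIb G d w v al u be)"
  using assms
proof (induction w)
  case Nil then show ?case by simp
next
  case (Cons a w)
  have a: "a \<in> lgens E0 E1" and gw: "set w \<subseteq> lgens E0 E1" using Cons.prems by auto
  show ?case
  proof (cases "w = []")
    case True
    then show ?thesis
    proof (cases a)
      case (LV y)
      then have "NFok E0 E1 s r IIb G d (a # w) y [] y []"
        unfolding NFok_def using True a by (auto simp: nfw_Nil hW_refl)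
      then show ?thesis by blast
    next
      case (LE e)
      then have e: "e \<in> E1" using a by simp
      have "WI IIb [LE e] [LE e, LV (r e)]" using hW_sym[OF hR_er[OF e]] .
      moreover have "word_deg G d [LE e] = word_deg G d [LE e, LV (r e)]"
        using wd_LV[of "[]" "r e"] by simp
      ultimately have "NFok E0 E1 s r IIb G d (a # w) (s e) [e] (r e) []"
        unfolding NFok_def using True LE e by (auto simp: nfw_Cons nfw_Nil)
      then show ?thesis by blast
    next
      case (LG e)
      then have e: "e \<in> E1" using a by simp
      have "WI IIb [LG e] [LV (r e), LG e]" using hW_sym[OF hR_rg[OF e]] .
      moreover have "word_deg G d [LG e] = word_deg G d [LV (r e), LG e]"
        using wd_LV[of "[LG e]" "r e"] e by simp
      ultimately have "NFok E0 E1 s r IIb G d (a # w) (r e) [] (s e) [e]"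
        unfolding NFok_def using True LG e by (auto simp: nfw_Nil)
      then show ?thesis by blast
    qed
  next
    case False
    from Cons.IH[OF False gw] show ?thesis
    proof
      assume "ZI IIb w"
      then have "ZI IIb ([a] @ w)" by (intro Z_left[OF hs hr]) (use a in auto)
      then show ?thesis by simp
    next
      assume "\<exists>v al u be. NFok E0 E1 s r IIb G d w v al u be"
      then obtain v al u be where n: "NFok E0 E1 s r IIb G d w v al u be" by blast
      then have p: "pth E0 E1 s r v al" "pth E0 E1 s r u be" "rng r v al = rng r u be"
        and ww: "WI IIb w (nfw r v al be)" and wdeg: "word_deg G d w = word_deg G d (nfw r v al be)"
        unfolding NFok_def by auto
      have w1: "WI IIb (a # w) (a # nfw r v al be)"
        using W_left[OF hs hr _ ww, of "[a]"] a by simp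
      have d1: "word_deg G d (a # w) = word_deg G d (a # nfw r v al be)" using wdeg by simp
      have "ZI IIb (a # nfw r v al be) \<or> (\<exists>v' al' u' be'. NFok E0 E1 s r IIb G d (a # nfw r v al be) v' al' u' be')"
        using a LM_V[OF _ p] LM_E[OF _ p] LM_G[OF _ p] by (cases a) auto
      then show ?thesis
      proof
        assume "ZI IIb (a # nfw r v al be)"
        then show ?thesis using hZ_W[OF _ hW_sym[OF w1]] by blast
      next
        assume "\<exists>v' al' u' be'. NFok E0 E1 s r IIb G d (a # nfw r v al be) v' al' u' be'"
        then obtain v' al' u' be' where "NFok E0 E1 s r IIb G d (a # nfw r v al be) v' al' u' be'" by blast
        then have "NFok E0 E1 s r IIb G d (a # w) v' al' u' be'"
          unfolding NFok_def using hW_trans[OF w1] d1 by auto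
        then show ?thesis by blast
      qed
    qed
  qed
qed

end




definition Hom where
  "Hom G E0 E1 d g = {f \<in> free_alg E0 E1. \<forall>w. f w \<noteq> 0 \<longrightarrow> word_deg G d w = g}"

lemma lpa_comp_Hom: "lpa_comp G E0 E1 s r d g = lclass E0 E1 s r ` Hom G E0 E1 d g"
  by (simp add: lpa_comp_def Hom_def)

lemma cm_mult_cl: "fa_mult (cm a u) (cm b v) = cm (a*b) (u@v)" by (rule fa_mult_cm)

definition Pg where
  "Pg E0 E1 s r G d g = {(v,k). pth E0 E1 s r v k \<and> (\<exists>u b. pth E0 E1 s r u b \<and> rng r v k = rng r u b
      \<and> word_deg G d (nfw r v k b) = g)}"

definition Mn where
  "Mn E0 E1 s r G d g = {(v,k) \<in> Pg E0 E1 s r G d g.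
      \<forall>k'. (v,k') \<in> Pg E0 E1 s r G d g \<and> (\<exists>c. k = k' @ c) \<longrightarrow> k' = k}"

definition MMd :: "'v set \<Rightarrow> 'e set \<Rightarrow> ('e \<Rightarrow> 'v) \<Rightarrow> ('e \<Rightarrow> 'v) \<Rightarrow> ('g, 'b) monoid_scheme \<Rightarrow> ('e \<Rightarrow> 'g)
   \<Rightarrow> 'g \<Rightarrow> (('v,'e) lgen list \<Rightarrow> 'r::{ring,monoid_mult}) set set" where
  "MMd E0 E1 s r G d g = (\<lambda>(v,k). lclass E0 E1 s r (cm 1 (nfw r v k k))) ` Mn E0 E1 s r G d g"

lemma Mn_exists:
  assumes "(v,k) \<in> Pg E0 E1 s r G d g"
  shows "\<exists>k0 c. (v,k0) \<in> Mn E0 E1 s r G d g \<and> k = k0 @ c"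
proof -
  let ?P = "\<lambda>n. (v, take n k) \<in> Pg E0 E1 s r G d g"
  have Pk: "?P (length k)" using assms by simp
  define n0 where "n0 = (LEAST n. ?P n)"
  have P0: "?P n0" unfolding n0_def using Pk by (rule LeastI)
  have le: "n0 \<le> length k" unfolding n0_def using Pk by (rule Least_le)
  have all: "\<forall>k'. (v,k') \<in> Pg E0 E1 s r G d g \<and> (\<exists>c. take n0 k = k' @ c) \<longrightarrow> k' = take n0 k"
  proof (intro allI impI, elim conjE exE)
    fix k' c assume k'P: "(v, k') \<in> Pg E0 E1 s r G d g" and eq: "take n0 k = k' @ c"
    have ln: "length (take n0 k) = n0" using le by simp
    then have lk: "length k' + length c = n0" using eq by (metis length_append)
    have "take (length k') (take n0 k) = k'" using eq by simp
    moreover have "take (length k') (take n0 k) = take (length k') k" using lk by (simp add: min_def)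
    ultimately have "take (length k') k = k'" by simp
    then have "?P (length k')" using k'P by simp
    then have "n0 \<le> length k'" unfolding n0_def by (rule Least_le)
    then have "length c = 0" using lk by linarith
    then have "c = []" by simp
    then show "k' = take n0 k" using eq by simp
  qed
  have "(v, take n0 k) \<in> Mn E0 E1 s r G d g" using P0 all unfolding Mn_def by simp
  then show ?thesis by (intro exI[of _ "take n0 k"] exI[of _ "drop n0 k"]) simp
qed

context
  fixes E0 :: "'v set" and E1 :: "'e set" and s r :: "'e \<Rightarrow> 'v"
    and Rt :: "'r::{ring,monoid_mult} itself"
    and G :: "('g, 'b) monoid_scheme" and d :: "'e \<Rightarrow> 'g"
  assumes hs: "s ` E1 \<subseteq> E0" and hr: "r ` E1 \<subseteq> E0"
    and grp: "group G" and hd: "d ` E1 \<subseteq> carrier G"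
begin

abbreviation IIc :: "(('v,'e) lgen list \<Rightarrow> 'r) set" where "IIc \<equiv> lpa_ideal E0 E1 s r"
abbreviation AA :: "(('v,'e) lgen list \<Rightarrow> 'r) set ring" where "AA \<equiv> lpa E0 E1 s r"
abbreviation cl :: "(('v,'e) lgen list \<Rightarrow> 'r) \<Rightarrow> (('v,'e) lgen list \<Rightarrow> 'r) set" where "cl \<equiv> lclass E0 E1 s r"
abbreviation SS :: "'g \<Rightarrow> (('v,'e) lgen list \<Rightarrow> 'r) set set" where "SS \<equiv> lpa_comp G E0 E1 s r d"
abbreviation HH :: "'g \<Rightarrow> (('v,'e) lgen list \<Rightarrow> 'r) set" where "HH \<equiv> Hom G E0 E1 d"

lemmas khW_refl = W_refl[OF hs hr] and khW_sym = W_sym[OF hs hr] and khW_trans = W_trans[OF hs hr]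
  and hW_left = W_left[OF hs hr] and hW_right = W_right[OF hs hr]
  and hC2 = C2[OF hs hr] and hC3 = C3[OF hs hr] and hC4 = C4[OF hs hr] and hC5 = C5[OF hs hr]
  and khpth_E0 = pth_E0[OF hs hr] and khpth_rng = pth_rng[OF hs hr] and khpth_append = pth_append[OF hs hr]
  and khnfw_gens = nfw_gens[OF hs hr]
  and hNF = NF[OF hs hr grp hd] and hwd_nfw = word_deg_nfw[OF hs hr grp hd]
  and hwd_carrier = word_deg_carrier[OF hs hr grp hd] and hwd_append = word_deg_append[OF hs hr grp hd]
  and hcl_eqI = cl_eqI[OF hs hr] and hlpa_add = lpa_add[OF hs hr] and hlpa_mult = lpa_mult[OF hs hr]
  and hlpa_zero = lpa_zero[OF hs hr] and hcl_carrier = cl_carrier[OF hs hr]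

lemma Hom_FA: "p \<in> HH g \<Longrightarrow> p \<in> free_alg E0 E1" by (simp add: Hom_def)

lemma Hom_zero[simp]: "0 \<in> HH g" by (simp add: Hom_def)

lemma Hom_add: "p \<in> HH g \<Longrightarrow> q \<in> HH g \<Longrightarrow> p + q \<in> HH g"
  unfolding Hom_def by (auto simp: FA_add) (metis add.right_neutral)+

lemma Hom_cm: "w \<noteq> [] \<Longrightarrow> set w \<subseteq> lgens E0 E1 \<Longrightarrow> word_deg G d w = g \<Longrightarrow> cm c w \<in> HH g"
proof -
  assume a: "w \<noteq> []" "set w \<subseteq> lgens E0 E1" "word_deg G d w = g"
  have "cm c w \<in> free_alg E0 E1" using FA_cm[OF a(1,2)] .
  then show ?thesis using a by (auto simp: Hom_def cm_def split: if_splits)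
qed

lemma Hom_mult:
  assumes p: "p \<in> HH a" and q: "q \<in> HH b"
  shows "fa_mult p q \<in> HH (a \<otimes>\<^bsub>G\<^esub> b)"
proof -
  have "word_deg G d w = a \<otimes>\<^bsub>G\<^esub> b" if nz: "fa_mult p q w \<noteq> 0" for w
  proof -
    obtain i where i: "p (take i w) \<noteq> 0" "q (drop i w) \<noteq> 0" using fa_mult_nonzero[OF nz] by blast
    have g: "set (take i w) \<subseteq> lgens E0 E1" "set (drop i w) \<subseteq> lgens E0 E1"
      using i p q by (auto simp: Hom_def free_alg_def)
    have "word_deg G d w = word_deg G d (take i w) \<otimes>\<^bsub>G\<^esub> word_deg G d (drop i w)"
      using hwd_append[OF g] by simp
    then show ?thesis using i p q by (auto simp: Hom_def)
  qed
  then show ?thesis using p q by (auto simp: Hom_def)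
qed

lemma Hom_induct[consumes 1, case_names zero step]:
  assumes "p \<in> HH g" "Q 0"
    "\<And>q c w. q \<in> HH g \<Longrightarrow> Q q \<Longrightarrow> w \<noteq> [] \<Longrightarrow> set w \<subseteq> lgens E0 E1 \<Longrightarrow> word_deg G d w = g
      \<Longrightarrow> Q (q + cm c w)"
  shows "Q p"
proof -
  have "p \<in> free_alg E0 E1" using assms(1) by (simp add: Hom_def)
  then have "p \<in> HH g \<longrightarrow> Q p"
  proof (induction p rule: fa_alg_induct)
    case zero then show ?case using assms(2) by (simp add: zero_fun_def)
  next
    case (step q c w)
    show ?case
    proof
      assume h: "q + cm c w \<in> HH g"
      have qh: "q \<in> HH g"
      proof -
        have "q x \<noteq> 0 \<Longrightarrow> word_deg G d x = g" for x
        proof -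
          assume "q x \<noteq> 0"
          then have "x \<noteq> w" using step by auto
          then have "(q + cm c w) x = q x" by (simp add: cm_def)
          then show ?thesis using h \<open>q x \<noteq> 0\<close> by (auto simp: Hom_def)
        qed
        then show ?thesis using step by (auto simp: Hom_def)
      qed
      show "Q (q + cm c w)"
      proof (cases "c = 0")
        case True then show ?thesis using step qh by simp
      next
        case False
        have "(q + cm c w) w = c" using step by (simp add: cm_def)
        then have "word_deg G d w = g" using h False by (auto simp: Hom_def)
        moreover have "Q q" using step qh by blast
        ultimately show ?thesis using assms(3)[of q w c] step qh by blast
      qed
    qed
  qed
  then show ?thesis using assms(1) by blast
qed


lemma words_cm_FA: "w \<noteq> [] \<Longrightarrow> set w \<subseteq> lgens E0 E1 \<Longrightarrow> cm c w \<in> free_alg E0 E1"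
  by (rule FA_cm)

lemma cm_lsmult: "cm c w = (\<lambda>x. c * monom w x)"
  by (auto simp: cm_def monom_def)

lemma cl_cm_Z:
  assumes "ZI IIc w" "w \<noteq> []" "set w \<subseteq> lgens E0 E1"
  shows "cl (cm c w) = \<zero>\<^bsub>AA\<^esub>"
proof -
  have h: "monom w \<in> IIc" using assms(1) by (simp add: ZI_def)
  have "cm c w \<in> IIc" unfolding cm_lsmult using li_lsmult[OF h, of c] .
  then show ?thesis unfolding hlpa_zero using assms by (intro hcl_eqI) auto
qed

lemma cl_cm_W:
  assumes "WI IIc u v" "u \<noteq> []" "set u \<subseteq> lgens E0 E1" "v \<noteq> []" "set v \<subseteq> lgens E0 E1"
  shows "cl (cm c u) = cl (cm c v)"
proof -
  have h: "monom u - monom v \<in> IIc" using assms(1) by (simp add: WI_def)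
  have "(\<lambda>x. c * (monom u - monom v) x) \<in> IIc" using li_lsmult[OF h, of c] .
  moreover have "(\<lambda>x. c * (monom u - monom v) x) = cm c u - cm c v"
    by (auto simp: cm_def monom_def)
  ultimately show ?thesis using assms by (intro hcl_eqI) auto
qed

lemma cl_mult_cm:
  assumes "u \<noteq> []" "set u \<subseteq> lgens E0 E1" "v \<noteq> []" "set v \<subseteq> lgens E0 E1"
  shows "cl (cm a u) \<otimes>\<^bsub>AA\<^esub> cl (cm b v) = cl (cm (a*b) (u@v))"
  using assms by (simp add: hlpa_mult fa_mult_cm)

lemma SS_zero: "\<zero>\<^bsub>AA\<^esub> \<in> SS g"
  unfolding lpa_comp_Hom hlpa_zero using Hom_zero by blast

lemma SS_add: "x \<in> SS g \<Longrightarrow> y \<in> SS g \<Longrightarrow> x \<oplus>\<^bsub>AA\<^esub> y \<in> SS g"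
  unfolding lpa_comp_Hom by (auto simp: hlpa_add Hom_FA intro!: imageI Hom_add)

lemma SS_mult: "x \<in> SS a \<Longrightarrow> y \<in> SS b \<Longrightarrow> x \<otimes>\<^bsub>AA\<^esub> y \<in> SS (a \<otimes>\<^bsub>G\<^esub> b)"
  unfolding lpa_comp_Hom by (auto simp: hlpa_mult Hom_FA intro!: imageI Hom_mult)

lemma SS_carrier: "SS g \<subseteq> carrier AA"
  unfolding lpa_comp_Hom by (auto simp: Hom_FA hcl_carrier)

lemma SP_sub:
  assumes "X \<subseteq> SS a" "Y \<subseteq> SS b"
  shows "set_prod AA X Y \<subseteq> SS (a \<otimes>\<^bsub>G\<^esub> b)"
proof
  fix z assume "z \<in> set_prod AA X Y"
  then show "z \<in> SS (a \<otimes>\<^bsub>G\<^esub> b)"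
    by (induction z rule: set_prod.induct) (use assms in \<open>auto intro: SS_zero SS_add SS_mult\<close>)
qed

lemma cm_in_SS: "w \<noteq> [] \<Longrightarrow> set w \<subseteq> lgens E0 E1 \<Longrightarrow> word_deg G d w = g \<Longrightarrow> cl (cm c w) \<in> SS g"
  unfolding lpa_comp_Hom by (auto intro!: imageI Hom_cm)

lemma nfw_ne: "nfw r v a b \<noteq> []" by (simp add: nfw_def)

lemma A_sup:
  assumes g: "g \<in> carrier G"
  shows "SS g \<subseteq> set_prod AA (set_prod AA (SS g) (SS (inv\<^bsub>G\<^esub> g))) (SS g)"
proof
  fix x assume "x \<in> SS g"
  then obtain p where p: "p \<in> HH g" "x = cl p" unfolding lpa_comp_Hom by auto
  have "cl p \<in> set_prod AA (set_prod AA (SS g) (SS (inv\<^bsub>G\<^esub> g))) (SS g)"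
    using p(1)
  proof (induction p rule: Hom_induct)
    case zero
    then show ?case using sp_zero hlpa_zero by metis
  next
    case (step q c w)
    have sw: "w \<noteq> []" "set w \<subseteq> lgens E0 E1" "word_deg G d w = g" "q \<in> HH g" using step by auto
    have cq: "cl (q + cm c w) = cl q \<oplus>\<^bsub>AA\<^esub> cl (cm c w)"
      using step Hom_FA words_cm_FA by (simp add: hlpa_add)
    have "cl (cm c w) \<in> set_prod AA (set_prod AA (SS g) (SS (inv\<^bsub>G\<^esub> g))) (SS g)"
    proof -
      from hNF[OF sw(1,2)] show ?thesis
      proof
        assume "ZI IIc w"
        then show ?thesis using cl_cm_Z step sp_zero by metis
      next
        assume "\<exists>v al u be. NFok E0 E1 s r IIc G d w v al u be"
        then obtain v al u be where n: "NFok E0 E1 s r IIc G d w v al u be" by blast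
        then have p: "pth E0 E1 s r v al" "pth E0 E1 s r u be" "rng r v al = rng r u be"
          and ww: "WI IIc w (nfw r v al be)" and wdeg: "word_deg G d w = word_deg G d (nfw r v al be)"
          unfolding NFok_def by auto
        let ?N = "nfw r v al be" and ?N' = "nfw r u be al"
        have gN: "set ?N \<subseteq> lgens E0 E1" "set ?N' \<subseteq> lgens E0 E1"
          using khnfw_gens p by auto
        have w1a: "WI IIc (w @ (?N' @ w)) (?N @ (?N' @ w))" by (rule hW_right) (use gN sw ww in auto)
        have w1b: "WI IIc ((?N @ ?N') @ w) ((?N @ ?N') @ ?N)" by (rule hW_left) (use gN ww in auto)
        have w1: "WI IIc (w @ ?N' @ w) (?N @ ?N' @ ?N)"
          using khW_trans[OF w1a] w1b by simp
        have w2: "WI IIc (?N @ ?N' @ ?N) (nfw r v al al @ ?N)"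
          using hW_right[OF _ hC2[OF p(1,2,1) p(3) p(3)], of ?N] gN by simp
        have w3: "WI IIc (nfw r v al al @ ?N) ?N"
          using hC2[OF p(1,1,2) refl p(3)[symmetric]] by simp
        have W: "WI IIc (w @ ?N' @ w) w"
          using khW_trans[OF w1 khW_trans[OF w2 khW_trans[OF w3 khW_sym[OF ww]]]] .
        have "cl (cm c w) = cl (cm (c * 1 * 1) (w @ ?N' @ w))"
          using cl_cm_W[OF W] gN step nfw_ne by simp
        also have "\<dots> = (cl (cm c w) \<otimes>\<^bsub>AA\<^esub> cl (cm 1 ?N')) \<otimes>\<^bsub>AA\<^esub> cl (cm 1 w)"
          using gN step nfw_ne by (simp add: cl_mult_cm)
        finally have eq: "cl (cm c w) = (cl (cm c w) \<otimes>\<^bsub>AA\<^esub> cl (cm 1 ?N')) \<otimes>\<^bsub>AA\<^esub> cl (cm 1 w)" .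
        have c1: "word_deg G d (map LE al :: ('v,'e) lgen list) \<in> carrier G"
          "word_deg G d (map LE be :: ('v,'e) lgen list) \<in> carrier G"
          using hwd_carrier pth_gens[OF hs hr p(1)] pth_gens[OF hs hr p(2)] by auto
        have dN': "word_deg G d ?N' = inv\<^bsub>G\<^esub> g"
          using hwd_nfw[OF p(2,1)] hwd_nfw[OF p(1,2)] wdeg sw(3) c1 grp
          by (simp add: group.inv_mult_group group.inv_closed group.inv_inv)
        have "cl (cm 1 ?N') \<in> SS (inv\<^bsub>G\<^esub> g)" using cm_in_SS[OF nfw_ne gN(2) dN'] .
        moreover have "cl (cm c w) \<in> SS g" "cl (cm 1 w) \<in> SS g" using cm_in_SS step by auto
        ultimately show ?thesis using eq by (metis sp_prod)
      qed
    qed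
    then show ?case using cq step by (metis sp_add)
  qed
  then show "x \<in> set_prod AA (set_prod AA (SS g) (SS (inv\<^bsub>G\<^esub> g))) (SS g)" using p by simp
qed

lemma A_eq:
  assumes g: "g \<in> carrier G"
  shows "set_prod AA (set_prod AA (SS g) (SS (inv\<^bsub>G\<^esub> g))) (SS g) = SS g"
proof
  have "set_prod AA (SS g) (SS (inv\<^bsub>G\<^esub> g)) \<subseteq> SS (g \<otimes>\<^bsub>G\<^esub> inv\<^bsub>G\<^esub> g)" by (rule SP_sub) auto
  then have "set_prod AA (set_prod AA (SS g) (SS (inv\<^bsub>G\<^esub> g))) (SS g) \<subseteq> SS ((g \<otimes>\<^bsub>G\<^esub> inv\<^bsub>G\<^esub> g) \<otimes>\<^bsub>G\<^esub> g)"
    by (rule SP_sub) auto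
  then show "set_prod AA (set_prod AA (SS g) (SS (inv\<^bsub>G\<^esub> g))) (SS g) \<subseteq> SS g"
    using g grp by (simp add: group.r_inv group.is_monoid monoid.l_one)
  show "SS g \<subseteq> set_prod AA (set_prod AA (SS g) (SS (inv\<^bsub>G\<^esub> g))) (SS g)" using A_sup[OF g] .
qed


lemma add_zero_r: "x \<in> carrier AA \<Longrightarrow> x \<oplus>\<^bsub>AA\<^esub> \<zero>\<^bsub>AA\<^esub> = x"
  using lpa_add_comm[OF hs hr, of x "\<zero>\<^bsub>AA\<^esub>"] lpa_add_zero[OF hs hr, of x] lpa_zero_carrier[OF hs hr] by simp

lemmas hadd_closed = lpa_add_closed[OF hs hr] and hmult_closed = lpa_mult_closed[OF hs hr]
  and hzero_carrier = lpa_zero_carrier[OF hs hr] and hmult_assoc = lpa_mult_assoc[OF hs hr]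
  and hdistl = lpa_distl[OF hs hr] and hdistr = lpa_distr[OF hs hr]
  and hzero_mult = lpa_zero_mult[OF hs hr] and hmult_zero = lpa_mult_zero[OF hs hr]
  and hadd_zero = lpa_add_zero[OF hs hr]

lemma fs_empty: "finsum AA id {} = \<zero>\<^bsub>AA\<^esub>"
  using abelian_monoid.finsum_empty[OF lpa_abelian_monoid[OF hs hr]] .

lemma tst1: "e \<in> carrier AA \<Longrightarrow> finsum AA id {} \<otimes>\<^bsub>AA\<^esub> e = \<zero>\<^bsub>AA\<^esub>"
  apply (simp only: fs_empty)
  apply (simp add: hzero_mult)
  done

lemma fs_insert: "finite F \<Longrightarrow> a \<notin> F \<Longrightarrow> F \<subseteq> carrier AA \<Longrightarrow> a \<in> carrier AA \<Longrightarrow>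
   finsum AA id (insert a F) = a \<oplus>\<^bsub>AA\<^esub> finsum AA id F"
proof -
  assume a: "finite F" "a \<notin> F" "F \<subseteq> carrier AA" "a \<in> carrier AA"
  have "id \<in> F \<rightarrow> carrier AA" using a(3) by auto
  then show ?thesis using abelian_monoid.finsum_insert[OF lpa_abelian_monoid[OF hs hr], of F a id] a by simp
qed

lemma fs_closed: "F \<subseteq> carrier AA \<Longrightarrow> finsum AA id F \<in> carrier AA"
proof -
  assume a: "F \<subseteq> carrier AA"
  have "id \<in> F \<rightarrow> carrier AA" using a by auto
  then show ?thesis using abelian_monoid.finsum_closed[OF lpa_abelian_monoid[OF hs hr], of id F] by simp
qed

definition OI :: "(('v,'e) lgen list \<Rightarrow> 'r) set set \<Rightarrow> bool" where
  "OI M \<longleftrightarrow> M \<subseteq> carrier AA \<and> (\<forall>e\<in>M. e \<otimes>\<^bsub>AA\<^esub> e = e) \<and> (\<forall>e\<in>M. \<forall>f\<in>M. e \<noteq> f \<longrightarrow> e \<otimes>\<^bsub>AA\<^esub> f = \<zero>\<^bsub>AA\<^esub>)"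

lemma fsid: "finsum AA (\<lambda>a. a) F = finsum AA id F" by (simp add: id_def)

lemma OI_c: "OI M \<Longrightarrow> e \<in> M \<Longrightarrow> e \<in> carrier AA" by (auto simp: OI_def)
lemma OI_i: "OI M \<Longrightarrow> e \<in> M \<Longrightarrow> e \<otimes>\<^bsub>AA\<^esub> e = e" by (simp add: OI_def)
lemma OI_o: "OI M \<Longrightarrow> e \<in> M \<Longrightarrow> f \<in> M \<Longrightarrow> e \<noteq> f \<Longrightarrow> e \<otimes>\<^bsub>AA\<^esub> f = \<zero>\<^bsub>AA\<^esub>" by (simp add: OI_def)
lemma OI_sub: "OI M \<Longrightarrow> F \<subseteq> M \<Longrightarrow> F \<subseteq> carrier AA" by (auto simp: OI_def)

lemma sig0:
  assumes "OI M" "finite F" "F \<subseteq> M" "e \<in> M" "e \<notin> F"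
  shows "finsum AA id F \<otimes>\<^bsub>AA\<^esub> e = \<zero>\<^bsub>AA\<^esub> \<and> e \<otimes>\<^bsub>AA\<^esub> finsum AA id F = \<zero>\<^bsub>AA\<^esub>"
  using assms(2,3,5)
proof (induction F rule: finite_induct)
  case empty
  have c: "e \<in> carrier AA" using OI_c[OF assms(1,4)] .
  show ?case unfolding fs_empty using hzero_mult[OF c] hmult_zero[OF c] by simp
next
  case (insert f F)
  have fM: "f \<in> M" and FM: "F \<subseteq> M" and ef: "e \<noteq> f" and eF: "e \<notin> F" using insert.prems by auto
  have c: "e \<in> carrier AA" "f \<in> carrier AA" "F \<subseteq> carrier AA"
    using OI_c[OF assms(1,4)] OI_c[OF assms(1) fM] OI_sub[OF assms(1) FM] by auto
  have o: "f \<otimes>\<^bsub>AA\<^esub> e = \<zero>\<^bsub>AA\<^esub>" "e \<otimes>\<^bsub>AA\<^esub> f = \<zero>\<^bsub>AA\<^esub>"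
    using OI_o[OF assms(1) fM assms(4)] OI_o[OF assms(1) assms(4) fM] ef by auto
  have ih: "finsum AA id F \<otimes>\<^bsub>AA\<^esub> e = \<zero>\<^bsub>AA\<^esub>" "e \<otimes>\<^bsub>AA\<^esub> finsum AA id F = \<zero>\<^bsub>AA\<^esub>"
    using insert.IH FM eF by (simp_all add: id_def)
  have fi: "finsum AA id (insert f F) = f \<oplus>\<^bsub>AA\<^esub> finsum AA id F"
    using fs_insert[OF insert.hyps(1,2) c(3) c(2)] .
  have fc: "finsum AA id F \<in> carrier AA" using fs_closed[OF c(3)] .
  show ?case unfolding fi
    using hdistr[OF c(1) c(2) fc] hdistl[OF c(1) c(2) fc] o ih add_zero_r[OF hzero_carrier] by simp
qed

lemma sig1:
  assumes "OI M" "finite F" "F \<subseteq> M" "e \<in> F"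
  shows "finsum AA id F \<otimes>\<^bsub>AA\<^esub> e = e \<and> e \<otimes>\<^bsub>AA\<^esub> finsum AA id F = e"
proof -
  have F: "insert e (F - {e}) = F" using assms(4) by blast
  have eM: "e \<in> M" using assms by blast
  have c: "e \<in> carrier AA" "F - {e} \<subseteq> carrier AA" using OI_c[OF assms(1) eM] OI_sub[OF assms(1), of "F - {e}"] assms(3) by auto
  have idem: "e \<otimes>\<^bsub>AA\<^esub> e = e" using OI_i[OF assms(1) eM] .
  have z: "finsum AA id (F - {e}) \<otimes>\<^bsub>AA\<^esub> e = \<zero>\<^bsub>AA\<^esub>" "e \<otimes>\<^bsub>AA\<^esub> finsum AA id (F - {e}) = \<zero>\<^bsub>AA\<^esub>"
    using sig0[OF assms(1), of "F - {e}" e] assms eM by auto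
  have fc: "finsum AA id (F - {e}) \<in> carrier AA" using fs_closed[OF c(2)] .
  have "finsum AA id F = e \<oplus>\<^bsub>AA\<^esub> finsum AA id (F - {e})"
    using fs_insert[of "F - {e}" e] F c assms(2) by simp
  then show ?thesis
    using hdistr[OF c(1) c(1) fc] hdistl[OF c(1) c(1) fc] z idem add_zero_r[OF c(1)] by simp
qed

lemma sig2:
  assumes "OI M" "finite F'" "F' \<subseteq> M" "F \<subseteq> F'"
  shows "finsum AA id F' \<otimes>\<^bsub>AA\<^esub> finsum AA id F = finsum AA id F
       \<and> finsum AA id F \<otimes>\<^bsub>AA\<^esub> finsum AA id F' = finsum AA id F"
proof -
  have c': "F' \<subseteq> carrier AA" using OI_sub[OF assms(1,3)] .
  have fc': "finsum AA id F' \<in> carrier AA" using fs_closed[OF c'] .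
  have "finite F" using assms finite_subset by blast
  then show ?thesis using assms(4)
  proof (induction F rule: finite_induct)
    case empty
    show ?case unfolding fs_empty using hzero_mult[OF fc'] hmult_zero[OF fc'] by (simp add: fsid)
  next
    case (insert f F)
    have fF: "f \<in> F'" "F \<subseteq> F'" using insert.prems by auto
    have c: "f \<in> carrier AA" "F \<subseteq> carrier AA" using fF c' by auto
    have fc: "finsum AA id F \<in> carrier AA" using fs_closed[OF c(2)] .
    have s1: "finsum AA id F' \<otimes>\<^bsub>AA\<^esub> f = f" "f \<otimes>\<^bsub>AA\<^esub> finsum AA id F' = f"
      using sig1[OF assms(1,2,3) fF(1)] by auto
    have ih: "finsum AA id F' \<otimes>\<^bsub>AA\<^esub> finsum AA id F = finsum AA id F"
        "finsum AA id F \<otimes>\<^bsub>AA\<^esub> finsum AA id F' = finsum AA id F" using insert.IH fF(2) by (simp_all add: id_def)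
    have fi: "finsum AA id (insert f F) = f \<oplus>\<^bsub>AA\<^esub> finsum AA id F"
      using fs_insert[OF insert.hyps(1,2) c(2) c(1)] .
    show ?case unfolding fi
      using hdistl[OF fc' c(1) fc] hdistr[OF fc' c(1) fc] s1 ih by (simp add: fsid)
  qed
qed

lemma LU_mono:
  assumes "OI M" "finite F'" "F' \<subseteq> M" "F \<subseteq> F'" "x \<in> carrier AA" "finsum AA id F \<otimes>\<^bsub>AA\<^esub> x = x"
  shows "finsum AA id F' \<otimes>\<^bsub>AA\<^esub> x = x"
proof -
  have c: "finsum AA id F \<in> carrier AA" "finsum AA id F' \<in> carrier AA"
    using fs_closed OI_sub[OF assms(1)] assms(3,4) by (meson order_trans)+
  have "finsum AA id F' \<otimes>\<^bsub>AA\<^esub> x = finsum AA id F' \<otimes>\<^bsub>AA\<^esub> (finsum AA id F \<otimes>\<^bsub>AA\<^esub> x)" using assms by simp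
  also have "\<dots> = (finsum AA id F' \<otimes>\<^bsub>AA\<^esub> finsum AA id F) \<otimes>\<^bsub>AA\<^esub> x" using hmult_assoc[OF c(2) c(1) assms(5)] by simp
  also have "\<dots> = x" using sig2[OF assms(1-4)] assms by simp
  finally show ?thesis .
qed

lemma RU_mono:
  assumes "OI M" "finite F'" "F' \<subseteq> M" "F \<subseteq> F'" "x \<in> carrier AA" "x \<otimes>\<^bsub>AA\<^esub> finsum AA id F = x"
  shows "x \<otimes>\<^bsub>AA\<^esub> finsum AA id F' = x"
proof -
  have c: "finsum AA id F \<in> carrier AA" "finsum AA id F' \<in> carrier AA"
    using fs_closed OI_sub[OF assms(1)] assms(3,4) by (meson order_trans)+
  have "x \<otimes>\<^bsub>AA\<^esub> finsum AA id F' = (x \<otimes>\<^bsub>AA\<^esub> finsum AA id F) \<otimes>\<^bsub>AA\<^esub> finsum AA id F'" using assms by simp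
  also have "\<dots> = x \<otimes>\<^bsub>AA\<^esub> (finsum AA id F \<otimes>\<^bsub>AA\<^esub> finsum AA id F')" using hmult_assoc[OF assms(5) c(1) c(2)] by simp
  also have "\<dots> = x" using sig2[OF assms(1-4)] assms by simp
  finally show ?thesis .
qed

definition LU where "LU M x \<longleftrightarrow> (\<exists>F. finite F \<and> F \<subseteq> M \<and> finsum AA id F \<otimes>\<^bsub>AA\<^esub> x = x)"
definition RU where "RU M x \<longleftrightarrow> (\<exists>F. finite F \<and> F \<subseteq> M \<and> x \<otimes>\<^bsub>AA\<^esub> finsum AA id F = x)"
definition BU where "BU M x \<longleftrightarrow> (\<exists>F. finite F \<and> F \<subseteq> M \<and> finsum AA id F \<otimes>\<^bsub>AA\<^esub> x = x \<and> x \<otimes>\<^bsub>AA\<^esub> finsum AA id F = x)"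

lemma LU_zero: "LU M \<zero>\<^bsub>AA\<^esub>"
  unfolding LU_def by (rule exI[of _ "{}"]) (simp add: fs_empty hzero_mult hzero_carrier)
lemma RU_zero: "RU M \<zero>\<^bsub>AA\<^esub>"
  unfolding RU_def by (rule exI[of _ "{}"]) (simp add: fs_empty hzero_mult hzero_carrier)
lemma BU_zero: "BU M \<zero>\<^bsub>AA\<^esub>"
  unfolding BU_def by (rule exI[of _ "{}"]) (simp add: fs_empty hzero_mult hzero_carrier)

lemma union_c: "OI M \<Longrightarrow> F1 \<subseteq> M \<Longrightarrow> F2 \<subseteq> M \<Longrightarrow> finsum AA id (F1 \<union> F2) \<in> carrier AA"
  using fs_closed OI_sub by (metis Un_subset_iff)

lemma LU_add:
  assumes "OI M" "x \<in> carrier AA" "y \<in> carrier AA" "LU M x" "LU M y"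
  shows "LU M (x \<oplus>\<^bsub>AA\<^esub> y)"
proof -
  obtain F1 F2 where F: "finite F1" "F1 \<subseteq> M" "finsum AA id F1 \<otimes>\<^bsub>AA\<^esub> x = x"
    "finite F2" "F2 \<subseteq> M" "finsum AA id F2 \<otimes>\<^bsub>AA\<^esub> y = y" using assms unfolding LU_def by blast
  have a: "finsum AA id (F1 \<union> F2) \<otimes>\<^bsub>AA\<^esub> x = x" "finsum AA id (F1 \<union> F2) \<otimes>\<^bsub>AA\<^esub> y = y"
    using LU_mono[OF assms(1), of "F1 \<union> F2"] F assms by auto
  have c: "finsum AA id (F1 \<union> F2) \<in> carrier AA" using union_c[OF assms(1) F(2) F(5)] .
  have "finsum AA id (F1 \<union> F2) \<otimes>\<^bsub>AA\<^esub> (x \<oplus>\<^bsub>AA\<^esub> y) = x \<oplus>\<^bsub>AA\<^esub> y"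
    using hdistl[OF c assms(2,3)] a by simp
  then show ?thesis unfolding LU_def using F by (intro exI[of _ "F1 \<union> F2"]) simp
qed

lemma RU_add:
  assumes "OI M" "x \<in> carrier AA" "y \<in> carrier AA" "RU M x" "RU M y"
  shows "RU M (x \<oplus>\<^bsub>AA\<^esub> y)"
proof -
  obtain F1 F2 where F: "finite F1" "F1 \<subseteq> M" "x \<otimes>\<^bsub>AA\<^esub> finsum AA id F1 = x"
    "finite F2" "F2 \<subseteq> M" "y \<otimes>\<^bsub>AA\<^esub> finsum AA id F2 = y" using assms unfolding RU_def by blast
  have a: "x \<otimes>\<^bsub>AA\<^esub> finsum AA id (F1 \<union> F2) = x" "y \<otimes>\<^bsub>AA\<^esub> finsum AA id (F1 \<union> F2) = y"
    using RU_mono[OF assms(1), of "F1 \<union> F2"] F assms by auto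
  have c: "finsum AA id (F1 \<union> F2) \<in> carrier AA" using union_c[OF assms(1) F(2) F(5)] .
  have "(x \<oplus>\<^bsub>AA\<^esub> y) \<otimes>\<^bsub>AA\<^esub> finsum AA id (F1 \<union> F2) = x \<oplus>\<^bsub>AA\<^esub> y"
    using hdistr[OF c assms(2,3)] a by simp
  then show ?thesis unfolding RU_def using F by (intro exI[of _ "F1 \<union> F2"]) simp
qed

lemma BU_add:
  assumes "OI M" "x \<in> carrier AA" "y \<in> carrier AA" "BU M x" "BU M y"
  shows "BU M (x \<oplus>\<^bsub>AA\<^esub> y)"
proof -
  obtain F1 F2 where F: "finite F1" "F1 \<subseteq> M" "finsum AA id F1 \<otimes>\<^bsub>AA\<^esub> x = x" "x \<otimes>\<^bsub>AA\<^esub> finsum AA id F1 = x"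
    "finite F2" "F2 \<subseteq> M" "finsum AA id F2 \<otimes>\<^bsub>AA\<^esub> y = y" "y \<otimes>\<^bsub>AA\<^esub> finsum AA id F2 = y"
    using assms unfolding BU_def by blast
  have a: "finsum AA id (F1 \<union> F2) \<otimes>\<^bsub>AA\<^esub> x = x" "finsum AA id (F1 \<union> F2) \<otimes>\<^bsub>AA\<^esub> y = y"
    using LU_mono[OF assms(1), of "F1 \<union> F2"] F assms by auto
  have b: "x \<otimes>\<^bsub>AA\<^esub> finsum AA id (F1 \<union> F2) = x" "y \<otimes>\<^bsub>AA\<^esub> finsum AA id (F1 \<union> F2) = y"
    using RU_mono[OF assms(1), of "F1 \<union> F2"] F assms by auto
  have c: "finsum AA id (F1 \<union> F2) \<in> carrier AA" using union_c[OF assms(1) F(2) F(6)] .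
  have "finsum AA id (F1 \<union> F2) \<otimes>\<^bsub>AA\<^esub> (x \<oplus>\<^bsub>AA\<^esub> y) = x \<oplus>\<^bsub>AA\<^esub> y"
    using hdistl[OF c assms(2,3)] a by simp
  moreover have "(x \<oplus>\<^bsub>AA\<^esub> y) \<otimes>\<^bsub>AA\<^esub> finsum AA id (F1 \<union> F2) = x \<oplus>\<^bsub>AA\<^esub> y"
    using hdistr[OF c assms(2,3)] b by simp
  ultimately show ?thesis unfolding BU_def using F by (intro exI[of _ "F1 \<union> F2"]) simp
qed

lemma BU_mult:
  assumes "OI M" "x \<in> carrier AA" "y \<in> carrier AA" "LU M x" "RU M y"
  shows "BU M (x \<otimes>\<^bsub>AA\<^esub> y)"
proof -
  obtain F1 F2 where F: "finite F1" "F1 \<subseteq> M" "finsum AA id F1 \<otimes>\<^bsub>AA\<^esub> x = x"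
    "finite F2" "F2 \<subseteq> M" "y \<otimes>\<^bsub>AA\<^esub> finsum AA id F2 = y" using assms unfolding LU_def RU_def by blast
  have a: "finsum AA id (F1 \<union> F2) \<otimes>\<^bsub>AA\<^esub> x = x" using LU_mono[OF assms(1), of "F1 \<union> F2"] F assms by auto
  have b: "y \<otimes>\<^bsub>AA\<^esub> finsum AA id (F1 \<union> F2) = y" using RU_mono[OF assms(1), of "F1 \<union> F2"] F assms by auto
  have c: "finsum AA id (F1 \<union> F2) \<in> carrier AA" using union_c[OF assms(1) F(2) F(5)] .
  have "finsum AA id (F1 \<union> F2) \<otimes>\<^bsub>AA\<^esub> (x \<otimes>\<^bsub>AA\<^esub> y) = x \<otimes>\<^bsub>AA\<^esub> y"
    using hmult_assoc[OF c assms(2,3)] a by simp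
  moreover have "(x \<otimes>\<^bsub>AA\<^esub> y) \<otimes>\<^bsub>AA\<^esub> finsum AA id (F1 \<union> F2) = x \<otimes>\<^bsub>AA\<^esub> y"
    using hmult_assoc[OF assms(2,3) c] b by simp
  ultimately show ?thesis unfolding BU_def using F by (intro exI[of _ "F1 \<union> F2"]) simp
qed

lemma LU_single:
  assumes "OI M" "e \<in> M" "x \<in> carrier AA" "e \<otimes>\<^bsub>AA\<^esub> x = x"
  shows "LU M x"
proof -
  have "finsum AA id {e} = e" using fs_insert[of "{}" e] OI_c[OF assms(1,2)] add_zero_r[of e] by (simp add: fs_empty)
  then show ?thesis unfolding LU_def using assms by (intro exI[of _ "{e}"]) simp
qed

lemma RU_single:
  assumes "OI M" "e \<in> M" "x \<in> carrier AA" "x \<otimes>\<^bsub>AA\<^esub> e = x"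
  shows "RU M x"
proof -
  have "finsum AA id {e} = e" using fs_insert[of "{}" e] OI_c[OF assms(1,2)] add_zero_r[of e] by (simp add: fs_empty)
  then show ?thesis unfolding RU_def using assms by (intro exI[of _ "{e}"]) simp
qed


abbreviation MM :: "'g \<Rightarrow> (('v,'e) lgen list \<Rightarrow> 'r) set set" where "MM \<equiv> MMd E0 E1 s r G d"

lemma deg_swap:
  assumes "pth E0 E1 s r v a" "pth E0 E1 s r u b"
  shows "word_deg G d (nfw r u b a) = inv\<^bsub>G\<^esub> (word_deg G d (nfw r v a b))"
proof -
  have c1: "word_deg G d (map LE a :: ('v,'e) lgen list) \<in> carrier G"
    "word_deg G d (map LE b :: ('v,'e) lgen list) \<in> carrier G"
    using hwd_carrier pth_gens[OF hs hr assms(1)] pth_gens[OF hs hr assms(2)] by auto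
  show ?thesis using hwd_nfw[OF assms(2,1)] hwd_nfw[OF assms(1,2)] c1 grp
    by (simp add: group.inv_mult_group group.inv_closed group.inv_inv)
qed

lemma MM_OI: "OI (MM g)"
  unfolding OI_def
proof (intro conjI ballI impI)
  show "MM g \<subseteq> carrier AA"
  proof
    fix e assume "e \<in> MM g"
    then obtain v k where vk: "(v,k) \<in> Mn E0 E1 s r G d g" "e = cl (cm 1 (nfw r v k k))"
      unfolding MMd_def by auto
    then have p: "pth E0 E1 s r v k" unfolding Mn_def Pg_def by auto
    show "e \<in> carrier AA" using hcl_carrier[OF words_cm_FA[OF nfw_ne khnfw_gens[OF p p]]] vk by simp
  qed
next
  fix e assume "e \<in> MM g"
  then obtain v k where vk: "(v,k) \<in> Mn E0 E1 s r G d g" "e = cl (cm 1 (nfw r v k k))"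
    unfolding MMd_def by auto
  then have p: "pth E0 E1 s r v k" unfolding Mn_def Pg_def by auto
  have gN: "set (nfw r v k k) \<subseteq> lgens E0 E1" using khnfw_gens[OF p p] .
  have "e \<otimes>\<^bsub>AA\<^esub> e = cl (cm (1*1) (nfw r v k k @ nfw r v k k))"
    using vk gN nfw_ne by (simp add: cl_mult_cm)
  also have "\<dots> = e" using cl_cm_W[OF hC2[OF p p p refl refl]] gN nfw_ne vk by simp
  finally show "e \<otimes>\<^bsub>AA\<^esub> e = e" .
next
  fix e f assume ef: "e \<in> MM g" "f \<in> MM g" "e \<noteq> f"
  obtain v k where vk: "(v,k) \<in> Mn E0 E1 s r G d g" "e = cl (cm 1 (nfw r v k k))"
    using ef unfolding MMd_def by auto
  obtain v' k' where vk': "(v',k') \<in> Mn E0 E1 s r G d g" "f = cl (cm 1 (nfw r v' k' k'))"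
    using ef unfolding MMd_def by auto
  have p: "pth E0 E1 s r v k" "pth E0 E1 s r v' k'" using vk vk' unfolding Mn_def Pg_def by auto
  have i1: "\<not> (v = v' \<and> (\<exists>c. k' = k @ c))"
  proof
    assume h: "v = v' \<and> (\<exists>c. k' = k @ c)"
    then have "k = k'" using vk vk' unfolding Mn_def by auto
    then show False using ef vk vk' h by simp
  qed
  have i2: "\<not> (v = v' \<and> (\<exists>c. k = k' @ c))"
  proof
    assume h: "v = v' \<and> (\<exists>c. k = k' @ c)"
    then have "k' = k" using vk vk' unfolding Mn_def by auto
    then show False using ef vk vk' h by simp
  qed
  have gN: "set (nfw r v k k) \<subseteq> lgens E0 E1" "set (nfw r v' k' k') \<subseteq> lgens E0 E1"
    using khnfw_gens p by auto
  have "e \<otimes>\<^bsub>AA\<^esub> f = cl (cm (1*1) (nfw r v k k @ nfw r v' k' k'))"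
    using vk vk' gN nfw_ne by (simp add: cl_mult_cm)
  also have "\<dots> = \<zero>\<^bsub>AA\<^esub>" using cl_cm_Z[OF hC5[OF p i1 i2]] gN nfw_ne by simp
  finally show "e \<otimes>\<^bsub>AA\<^esub> f = \<zero>\<^bsub>AA\<^esub>" .
qed

lemma MM_T:
  assumes g: "g \<in> carrier G"
  shows "MM g \<subseteq> set_prod AA (SS g) (SS (inv\<^bsub>G\<^esub> g))"
proof
  fix e assume "e \<in> MM g"
  then obtain v k where vk: "(v,k) \<in> Mn E0 E1 s r G d g" "e = cl (cm 1 (nfw r v k k))"
    unfolding MMd_def by auto
  then obtain u b where p: "pth E0 E1 s r v k" "pth E0 E1 s r u b" "rng r v k = rng r u b"
      "word_deg G d (nfw r v k b) = g"
    unfolding Mn_def Pg_def by auto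
  have gN: "set (nfw r v k b) \<subseteq> lgens E0 E1" "set (nfw r u b k) \<subseteq> lgens E0 E1"
    "set (nfw r v k k) \<subseteq> lgens E0 E1" using khnfw_gens p by auto
  have d2: "word_deg G d (nfw r u b k) = inv\<^bsub>G\<^esub> g" using deg_swap[OF p(1,2)] p(4) by simp
  have m1: "cl (cm 1 (nfw r v k b)) \<in> SS g" using cm_in_SS[OF nfw_ne gN(1) p(4)] .
  have m2: "cl (cm 1 (nfw r u b k)) \<in> SS (inv\<^bsub>G\<^esub> g)" using cm_in_SS[OF nfw_ne gN(2) d2] .
  have "cl (cm 1 (nfw r v k b)) \<otimes>\<^bsub>AA\<^esub> cl (cm 1 (nfw r u b k)) = cl (cm (1*1) (nfw r v k b @ nfw r u b k))"
    using gN nfw_ne by (simp add: cl_mult_cm)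
  also have "\<dots> = e" using cl_cm_W[OF hC2[OF p(1,2,1) p(3) p(3)]] gN nfw_ne vk by simp
  finally show "e \<in> set_prod AA (SS g) (SS (inv\<^bsub>G\<^esub> g))" using m1 m2 by (metis sp_prod)
qed

lemma cl_carrier_cm: "w \<noteq> [] \<Longrightarrow> set w \<subseteq> lgens E0 E1 \<Longrightarrow> cl (cm c w) \<in> carrier AA"
  using hcl_carrier words_cm_FA by blast

lemma L_Sg:
  assumes x: "x \<in> SS g"
  shows "LU (MM g) x"
proof -
  obtain p where p: "p \<in> HH g" "x = cl p" using x unfolding lpa_comp_Hom by auto
  have "LU (MM g) (cl p)" using p(1)
  proof (induction p rule: Hom_induct)
    case zero then show ?case unfolding hlpa_zero[symmetric] by (rule LU_zero)
  next
    case (step q c w)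
    have sw: "w \<noteq> []" "set w \<subseteq> lgens E0 E1" "word_deg G d w = g" "q \<in> HH g" using step by auto
    have IH: "LU (MM g) (cl q)" using step by blast
    have cq: "cl (q + cm c w) = cl q \<oplus>\<^bsub>AA\<^esub> cl (cm c w)"
      using hlpa_add[OF Hom_FA[OF sw(4)] words_cm_FA[OF sw(1,2)]] by simp
    have cc: "cl q \<in> carrier AA" "cl (cm c w) \<in> carrier AA"
      using hcl_carrier[OF Hom_FA[OF sw(4)]] cl_carrier_cm[OF sw(1,2)] by auto
    have "LU (MM g) (cl (cm c w))"
    proof -
      from hNF[OF sw(1,2)] show ?thesis
      proof
        assume z: "ZI IIc w"
        have "cl (cm c w) = \<zero>\<^bsub>AA\<^esub>" using cl_cm_Z[OF z sw(1,2)] .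
        then show ?thesis by (simp add: LU_zero)
      next
        assume "\<exists>v al u be. NFok E0 E1 s r IIc G d w v al u be"
        then obtain v al u be where n: "NFok E0 E1 s r IIc G d w v al u be" by blast
        then have p: "pth E0 E1 s r v al" "pth E0 E1 s r u be" "rng r v al = rng r u be"
          and ww: "WI IIc w (nfw r v al be)" and wdeg: "word_deg G d w = word_deg G d (nfw r v al be)"
          unfolding NFok_def by auto
        have dg: "word_deg G d (nfw r v al be) = g" using wdeg sw(3) by simp
        have "pth E0 E1 s r v al \<and> (\<exists>u b. pth E0 E1 s r u b \<and> rng r v al = rng r u b \<and> word_deg G d (nfw r v al b) = g)"
          using p(1,2,3) dg by blast
        then have vP: "(v, al) \<in> Pg E0 E1 s r G d g" by (simp add: Pg_def)
        obtain k0 c' where k0: "(v,k0) \<in> Mn E0 E1 s r G d g" "al = k0 @ c'" using Mn_exists[OF vP] by blast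
        let ?e = "cl (cm 1 (nfw r v k0 k0))"
        have eM: "?e \<in> MM g" unfolding MMd_def by (rule image_eqI[where x="(v,k0)"]) (simp_all add: k0)
        have pk: "pth E0 E1 s r v k0" using k0 unfolding Mn_def Pg_def by auto
        have gN: "set (nfw r v k0 k0) \<subseteq> lgens E0 E1" "set (nfw r v al be) \<subseteq> lgens E0 E1"
          using khnfw_gens[OF pk pk] khnfw_gens[OF p(1,2)] by auto
        have w1: "WI IIc (nfw r v k0 k0 @ w) (nfw r v k0 k0 @ nfw r v al be)" using hW_left[OF gN(1) ww] .
        have pa: "pth E0 E1 s r v (k0 @ c')" "rng r v (k0 @ c') = rng r u be" using p k0(2) by auto
        have w2: "WI IIc (nfw r v k0 k0 @ nfw r v al be) (nfw r v al be)"
          using hC3[OF pa(1) p(2) pa(2)] k0(2) by simp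
        have W: "WI IIc (nfw r v k0 k0 @ w) w" using khW_trans[OF w1 khW_trans[OF w2 khW_sym[OF ww]]] .
        have "?e \<otimes>\<^bsub>AA\<^esub> cl (cm c w) = cl (cm (1 * c) (nfw r v k0 k0 @ w))"
          using cl_mult_cm[OF nfw_ne gN(1) sw(1,2)] .
        also have "\<dots> = cl (cm c w)" using cl_cm_W[OF W] gN(1) sw(1,2) by simp
        finally show ?thesis by (rule LU_single[OF MM_OI eM cc(2)])
      qed
    qed
    then show ?case unfolding cq by (rule LU_add[OF MM_OI cc IH])
  qed
  then show ?thesis using p by simp
qed

lemma R_Sg:
  assumes g: "g \<in> carrier G" and y: "y \<in> SS (inv\<^bsub>G\<^esub> g)"
  shows "RU (MM g) y"
proof -
  obtain p where p: "p \<in> HH (inv\<^bsub>G\<^esub> g)" "y = cl p" using y unfolding lpa_comp_Hom by auto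
  have "RU (MM g) (cl p)" using p(1)
  proof (induction p rule: Hom_induct)
    case zero then show ?case unfolding hlpa_zero[symmetric] by (rule RU_zero)
  next
    case (step q c w)
    have sw: "w \<noteq> []" "set w \<subseteq> lgens E0 E1" "word_deg G d w = inv\<^bsub>G\<^esub> g" "q \<in> HH (inv\<^bsub>G\<^esub> g)" using step by auto
    have IH: "RU (MM g) (cl q)" using step by blast
    have cq: "cl (q + cm c w) = cl q \<oplus>\<^bsub>AA\<^esub> cl (cm c w)"
      using hlpa_add[OF Hom_FA[OF sw(4)] words_cm_FA[OF sw(1,2)]] by simp
    have cc: "cl q \<in> carrier AA" "cl (cm c w) \<in> carrier AA"
      using hcl_carrier[OF Hom_FA[OF sw(4)]] cl_carrier_cm[OF sw(1,2)] by auto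
    have "RU (MM g) (cl (cm c w))"
    proof -
      from hNF[OF sw(1,2)] show ?thesis
      proof
        assume z: "ZI IIc w"
        have "cl (cm c w) = \<zero>\<^bsub>AA\<^esub>" using cl_cm_Z[OF z sw(1,2)] .
        then show ?thesis by (simp add: RU_zero)
      next
        assume "\<exists>v al u be. NFok E0 E1 s r IIc G d w v al u be"
        then obtain v al u be where n: "NFok E0 E1 s r IIc G d w v al u be" by blast
        then have p: "pth E0 E1 s r v al" "pth E0 E1 s r u be" "rng r v al = rng r u be"
          and ww: "WI IIc w (nfw r v al be)" and wdeg: "word_deg G d w = word_deg G d (nfw r v al be)"
          unfolding NFok_def by auto
        have dN: "word_deg G d (nfw r v al be) = inv\<^bsub>G\<^esub> g" using wdeg sw(3) by simp
        have dg: "word_deg G d (nfw r u be al) = g"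
          unfolding deg_swap[OF p(1,2)] dN using g grp by (simp add: group.inv_inv)
        have "pth E0 E1 s r u be \<and> (\<exists>u' b. pth E0 E1 s r u' b \<and> rng r u be = rng r u' b \<and> word_deg G d (nfw r u be b) = g)"
          using p(1,2,3) dg by (metis)
        then have uP: "(u, be) \<in> Pg E0 E1 s r G d g" by (simp add: Pg_def)
        obtain k0 c' where k0: "(u,k0) \<in> Mn E0 E1 s r G d g" "be = k0 @ c'" using Mn_exists[OF uP] by blast
        let ?e = "cl (cm 1 (nfw r u k0 k0))"
        have eM: "?e \<in> MM g" unfolding MMd_def by (rule image_eqI[where x="(u,k0)"]) (simp_all add: k0)
        have pk: "pth E0 E1 s r u k0" using k0 unfolding Mn_def Pg_def by auto
        have gN: "set (nfw r u k0 k0) \<subseteq> lgens E0 E1" "set (nfw r v al be) \<subseteq> lgens E0 E1"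
          using khnfw_gens[OF pk pk] khnfw_gens[OF p(1,2)] by auto
        have w1: "WI IIc (w @ nfw r u k0 k0) (nfw r v al be @ nfw r u k0 k0)" using hW_right[OF gN(1) ww] .
        have pa: "pth E0 E1 s r u (k0 @ c')" "rng r u (k0 @ c') = rng r v al" using p k0(2) by auto
        have w2: "WI IIc (nfw r v al be @ nfw r u k0 k0) (nfw r v al be)"
          using hC4[OF pa(1) p(1) pa(2)] k0(2) by simp
        have W: "WI IIc (w @ nfw r u k0 k0) w" using khW_trans[OF w1 khW_trans[OF w2 khW_sym[OF ww]]] .
        have "cl (cm c w) \<otimes>\<^bsub>AA\<^esub> ?e = cl (cm (c * 1) (w @ nfw r u k0 k0))"
          using cl_mult_cm[OF sw(1,2) nfw_ne gN(1)] .
        also have "\<dots> = cl (cm c w)" using cl_cm_W[OF W] gN(1) sw(1,2) by simp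
        finally show ?thesis by (rule RU_single[OF MM_OI eM cc(2)])
      qed
    qed
    then show ?case unfolding cq by (rule RU_add[OF MM_OI cc IH])
  qed
  then show ?thesis using p by simp
qed

lemma T_BU:
  assumes g: "g \<in> carrier G" and x: "x \<in> set_prod AA (SS g) (SS (inv\<^bsub>G\<^esub> g))"
  shows "BU (MM g) x"
proof -
  have Tc: "set_prod AA (SS g) (SS (inv\<^bsub>G\<^esub> g)) \<subseteq> carrier AA"
    using SP_sub[of "SS g" g "SS (inv\<^bsub>G\<^esub> g)" "inv\<^bsub>G\<^esub> g"] SS_carrier by blast
  show ?thesis using x
  proof (induction x rule: set_prod.induct)
    case sp_zero then show ?case by (rule BU_zero)
  next
    case (sp_prod x y)
    then show ?case using BU_mult[OF MM_OI] L_Sg R_Sg[OF g] SS_carrier by blast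
  next
    case (sp_add a b)
    then show ?case using BU_add[OF MM_OI] Tc by blast
  qed
qed

lemma main_vs: "virtually_epsilon_strong G AA SS"
  unfolding virtually_epsilon_strong_def
proof (intro ballI conjI)
  fix g assume g: "g \<in> carrier G"
  show "set_prod AA (set_prod AA (SS g) (SS (inv\<^bsub>G\<^esub> g))) (SS g) = SS g" using A_eq[OF g] .
  show "has_enough_idempotents AA (set_prod AA (SS g) (SS (inv\<^bsub>G\<^esub> g)))"
    unfolding has_enough_idempotents_def
  proof (intro exI[of _ "MM g"] conjI ballI impI)
    show "MM g \<subseteq> set_prod AA (SS g) (SS (inv\<^bsub>G\<^esub> g))" using MM_T[OF g] .
    fix e assume e: "e \<in> MM g"
    show "e \<otimes>\<^bsub>AA\<^esub> e = e" using OI_i[OF MM_OI e] .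
    fix f assume f: "f \<in> MM g"
    show "e \<otimes>\<^bsub>AA\<^esub> f = f \<otimes>\<^bsub>AA\<^esub> e"
    proof (cases "e = f")
      case True then show ?thesis by simp
    next
      case False then show ?thesis using OI_o[OF MM_OI e f] OI_o[OF MM_OI f e] by metis
    qed
    assume "e \<noteq> f" then show "e \<otimes>\<^bsub>AA\<^esub> f = \<zero>\<^bsub>AA\<^esub>" using OI_o[OF MM_OI e f] by simp
  next
    fix x assume x: "x \<in> set_prod AA (SS g) (SS (inv\<^bsub>G\<^esub> g))"
    then obtain F where F: "finite F" "F \<subseteq> MM g" "finsum AA id F \<otimes>\<^bsub>AA\<^esub> x = x" "x \<otimes>\<^bsub>AA\<^esub> finsum AA id F = x"
      using T_BU[OF g x] unfolding BU_def by blast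
    have "finsum AA id F \<in> joins AA (MM g)" unfolding joins_def using F by blast
    then show "\<exists>f\<in>joins AA (MM g). f \<otimes>\<^bsub>AA\<^esub> x = x \<and> x \<otimes>\<^bsub>AA\<^esub> f = x" using F by blast
  qed
qed

end

theorem proposition4p3:
  fixes G :: "('g, 'b) monoid_scheme"
    and E0 :: "'v set" and E1 :: "'e set" and s r :: "'e \<Rightarrow> 'v"
    and d :: "'e \<Rightarrow> 'g"
  assumes "group G"
    and "s ` E1 \<subseteq> E0" and "r ` E1 \<subseteq> E0"
    and "d ` E1 \<subseteq> carrier G"
  shows "virtually_epsilon_strong G
           (lpa E0 E1 s r :: (('v, 'e) lgen list \<Rightarrow> 'r::{ring, monoid_mult}) set ring)
           (lpa_comp G E0 E1 s r d)"
  using main_vs[OF assms(2,3,1,4)] .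


end
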